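(* Let $m,n,r\ge 1$, $n_A\ge 1$, $\mu,\nu>0$, and let the data $M=[M_1\ \cdots\ M_{n_A}]\in\mathbb{R}^{m\times n}$, $\Omega_l$, $\mathcal{N}(l)$, $E_{lk}$, $f_l$ be as described in the context, with the area adjacency graph connected. Let $(\{\overline U_l\},\{\overline V_l\},\{\overline S_{lj}\},\{\overline q_{lj}\})$ be a stationary point of the decentralized problem $(\mathrm{P})$ defined in the context. Then $\overline U:=\overline U_1=\cdots=\overline U_{n_A}$, and with $\overline V:=[\overline V_1\ \cdots\ \overline V_{n_A}]\in\mathbb{R}^{r\times n}$ and $\overline X:=\overline U\,\overline V$, if $$\big\|\mu\,\mathcal{B}^*\big(\mathcal{B}(\overline X)-d\big)\big\|_2\le 1,$$ then $\overline X$ is a global minimizer of $$\min_{X\in\mathbb{R}^{m\times n}}\ \|X\|_*+\frac{\mu}{2}\|\mathcal{B}(X)-d\|_2^2 .$$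
   Context: Data: a matrix $M\in\mathbb{R}^{m\times n}$ whose column index set $\{1,\dots,n\}$ is partitioned into $n_A$ areas $A^1,\dots,A^{n_A}$ with $|A^l|=n_l$; write $M=[M_1\ \cdots\ M_{n_A}]$ with $M_l\in\mathbb{R}^{m\times n_l}$ the columns of area $l$, and similarly $X=[X_1\ \cdots\ X_{n_A}]$ for any $X\in\mathbb{R}^{m\times n}$. For each $l$, $\Omega_l$ is a set of observed entry positions of $M_l$, and $P_{\Omega_l}$ is the operator keeping entries in $\Omega_l$ and setting others to $0$; $\Omega=\bigcup_l\Omega_l$ (viewed as positions in $M$), with elements $(i_1,j_1),\dots,(i_{|\Omega|},j_{|\Omega|})$. $\mathcal{N}(l)\subseteq\{1,\dots,n_A\}\setminus\{l\}$ is the set of areas adjacent to area $l$ (symmetric relation); the graph on areas with these adjacencies is assumed connected. For each $l$ and each $k\in\{l\}\cup\mathcal{N}(l)$, $E_{lk}:\mathbb{R}^{m\times n_k}\to\mathbb{C}^{p_l}$ is a (real-)linear map acting on the columns of area $k$, and $f_l\in\mathbb{C}^{p_l}$. Decentralized problem $(\mathrm{P})$: minimize over $U_l\in\mathbb{R}^{m\times r}$, $V_l\in\mathbb{R}^{r\times n_l}$ ($l=1,\dots,n_A$), auxiliary $S_{lj}$ and $q_{lj}$ ($j\in\mathcal{N}(l)$) the function $$\sum_{l=1}^{n_A}\Big[\tfrac12\big(\tfrac1{n_A}\|U_l\|_F^2+\|V_l\|_F^2\big)+\tfrac{\mu}{2}\|P_{\Omega_l}(U_lV_l-M_l)\|_F^2+\tfrac{\nu}{2}\big\|E_{ll}(U_lV_l)+\textstyle\sum_{j\in\mathcal{N}(l)}q_{lj}-f_l\big\|_2^2\Big]$$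 subject to $U_l=S_{lj}=U_j$ and $E_{lj}(U_jV_j)=q_{lj}$ for all $l$ and all $j\in\mathcal{N}(l)$. A stationary point means a point satisfying the first-order (KKT) optimality conditions of this equality-constrained problem. The map $\mathcal{B}$ and vector $d$: $\mathcal{B}(X)=\big(X_{i_1j_1},\dots,X_{i_{|\Omega|}j_{|\Omega|}},\ \sqrt{\nu/\mu}\,(E_{11}(X_1)+\sum_{j\in\mathcal{N}(1)}E_{1j}(X_j)),\dots,\sqrt{\nu/\mu}\,(E_{n_An_A}(X_{n_A})+\sum_{j\in\mathcal{N}(n_A)}E_{n_Aj}(X_j))\big)$ and $d=\big(M_{i_1j_1},\dots,M_{i_{|\Omega|}j_{|\Omega|}},\sqrt{\nu/\mu}\,f_1,\dots,\sqrt{\nu/\mu}\,f_{n_A}\big)$. Complex coordinates are identified with pairs of real coordinates, so $\mathcal{B}$ is a real linear map into some $\mathbb{R}^L$; $\mathcal{B}^*$ is its adjoint with respect to the Frobenius inner product $\langle B,X\rangle_F=\mathrm{tr}(B^{\intercal}X)$ and the Euclidean inner product (i.e. if $[\mathcal{B}(X)]_i=\langle B_i,X\rangle_F$ then $\mathcal{B}^*(z)=\sum_i z_iB_i$). $\|\cdot\|_*$ is the nuclear norm and $\|\cdot\|_2$ applied to a matrix is the spectral norm. *)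

theory Defs
  imports Complex_Main
begin

text \<open>Matrices are functions nat => nat => real; only entries with
row index < m and column index < n (resp. the stated bounds) are meaningful.
Areas, rows, columns and rank indices are numbered from 0.
The column partition is given by an area-assignment ar: column b < n lies in area ar b.\<close>

definition area :: "(nat \<Rightarrow> nat) \<Rightarrow> nat \<Rightarrow> nat \<Rightarrow> nat set" where
  "area ar n l = {b. b < n \<and> ar b = l}"

definition is_csvd :: "nat \<Rightarrow> nat \<Rightarrow> (nat \<Rightarrow> nat \<Rightarrow> real) \<Rightarrow> nat \<Rightarrow> (nat \<Rightarrow> real)
    \<Rightarrow> (nat \<Rightarrow> nat \<Rightarrow> real) \<Rightarrow> (nat \<Rightarrow> nat \<Rightarrow> real) \<Rightarrow> bool" where
  "is_csvd m n X k \<sigma> u v \<longleftrightarrow>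
     (\<forall>i<k. \<sigma> i > 0) \<and>
     (\<forall>i<k. \<forall>j<k. (\<Sum>a<m. u i a * u j a) = (if i = j then 1 else 0)) \<and>
     (\<forall>i<k. \<forall>j<k. (\<Sum>b<n. v i b * v j b) = (if i = j then 1 else 0)) \<and>
     (\<forall>a<m. \<forall>b<n. X a b = (\<Sum>i<k. \<sigma> i * u i a * v i b))"

definition nuclear_norm :: "nat \<Rightarrow> nat \<Rightarrow> (nat \<Rightarrow> nat \<Rightarrow> real) \<Rightarrow> real" where
  "nuclear_norm m n X =
     (SOME s. \<exists>k \<sigma> u v. is_csvd m n X k \<sigma> u v \<and> s = (\<Sum>i<k. \<sigma> i))"

definition spectral_norm :: "nat \<Rightarrow> nat \<Rightarrow> (nat \<Rightarrow> nat \<Rightarrow> real) \<Rightarrow> real" where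
  "spectral_norm m n X =
     (SOME s. \<exists>k \<sigma> u v. is_csvd m n X k \<sigma> u v \<and> s = Max (insert 0 (\<sigma> ` {..<k})))"

text \<open>The real-linear map E_lk : R^(m x n_k) -> C^(p_l), acting on the columns of area k,
given by its coefficient array Ec l k i a b (component i, entry (a,b) with b in area k).\<close>
definition Eapp :: "(nat \<Rightarrow> nat \<Rightarrow> nat \<Rightarrow> nat \<Rightarrow> nat \<Rightarrow> complex) \<Rightarrow> nat \<Rightarrow> (nat \<Rightarrow> nat) \<Rightarrow> nat
    \<Rightarrow> nat \<Rightarrow> nat \<Rightarrow> (nat \<Rightarrow> nat \<Rightarrow> real) \<Rightarrow> nat \<Rightarrow> complex" where
  "Eapp Ec m ar n l k X i = (\<Sum>a<m. \<Sum>b\<in>area ar n k. Ec l k i a b * complex_of_real (X a b))"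

text \<open>Product U_l V_l (columns indexed by the global column indices of area l).\<close>
definition prodUV :: "nat \<Rightarrow> (nat \<Rightarrow> nat \<Rightarrow> nat \<Rightarrow> real) \<Rightarrow> (nat \<Rightarrow> nat \<Rightarrow> nat \<Rightarrow> real)
    \<Rightarrow> nat \<Rightarrow> nat \<Rightarrow> nat \<Rightarrow> real" where
  "prodUV r U V l = (\<lambda>a b. \<Sum>k<r. U l a k * V l k b)"

definition Pobj where
  "Pobj m n r nA ar \<Omega> N Ec p f \<mu> \<nu> M U V q =
    (\<Sum>l<nA.
       (1/2) * ((1 / real nA) * (\<Sum>a<m. \<Sum>k<r. (U l a k)\<^sup>2)
                + (\<Sum>k<r. \<Sum>b\<in>area ar n l. (V l k b)\<^sup>2))
     + \<mu>/2 * (\<Sum>(a,b)\<in>\<Omega> l. (prodUV r U V l a b - M a b)\<^sup>2)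
     + \<nu>/2 * (\<Sum>i<p l. (cmod (Eapp Ec m ar n l l (prodUV r U V l) i
                               + (\<Sum>j\<in>N l. q l j i) - f l i))\<^sup>2))"

definition Pfeasible where
  "Pfeasible m n r nA ar N Ec p U V S q \<longleftrightarrow>
    (\<forall>l<nA. \<forall>j\<in>N l.
       (\<forall>a<m. \<forall>k<r. U l a k = S l j a k \<and> S l j a k = U j a k) \<and>
       (\<forall>i<p l. Eapp Ec m ar n l j (prodUV r U V j) i = q l j i))"

text \<open>Lagrangian of (P) with multipliers Lam (for U_l = S_lj), Gam (for S_lj = U_j)
and Pi (for E_lj(U_j V_j) = q_lj; complex, paired via the real inner product Re (conj x * y)).\<close>
definition Plag where
  "Plag m n r nA ar \<Omega> N Ec p f \<mu> \<nu> M U V S q Lam Gam Pi =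
    Pobj m n r nA ar \<Omega> N Ec p f \<mu> \<nu> M U V q
    + (\<Sum>l<nA. \<Sum>j\<in>N l.
         (\<Sum>a<m. \<Sum>k<r. Lam l j a k * (U l a k - S l j a k))
       + (\<Sum>a<m. \<Sum>k<r. Gam l j a k * (S l j a k - U j a k))
       + (\<Sum>i<p l. Re (cnj (Pi l j i) * (Eapp Ec m ar n l j (prodUV r U V j) i - q l j i))))"

text \<open>Stationary (KKT) point: feasible, and for some multipliers the gradient of the
Lagrangian in the primal variables vanishes, i.e. every directional derivative is 0.\<close>
definition Pstationary where
  "Pstationary m n r nA ar \<Omega> N Ec p f \<mu> \<nu> M U V S q \<longleftrightarrow>
    Pfeasible m n r nA ar N Ec p U V S q \<and>
    (\<exists>Lam Gam Pi. \<forall>dU dV dS dq.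
       ((\<lambda>t. Plag m n r nA ar \<Omega> N Ec p f \<mu> \<nu> M
              (\<lambda>l a k. U l a k + t * dU l a k)
              (\<lambda>l k b. V l k b + t * dV l k b)
              (\<lambda>l j a k. S l j a k + t * dS l j a k)
              (\<lambda>l j i. q l j i + complex_of_real t * dq l j i)
              Lam Gam Pi) has_real_derivative 0) (at 0))"

definition area_graph_connected :: "nat \<Rightarrow> (nat \<Rightarrow> nat set) \<Rightarrow> bool" where
  "area_graph_connected nA N \<longleftrightarrow>
    (\<forall>l<nA. \<forall>l'<nA. (l, l') \<in> {(x, y). x < nA \<and> y \<in> N x}\<^sup>*)"

text \<open>The map B: components indexed by Inl (a,b) for (a,b) in Omega, and by
Inr (l,i,True/False) for real/imaginary part of component i of the l-th block.\<close>
definition Bidx :: "nat \<Rightarrow> (nat \<Rightarrow> (nat \<times> nat) set) \<Rightarrow> (nat \<Rightarrow> nat)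
    \<Rightarrow> ((nat \<times> nat) + (nat \<times> nat \<times> bool)) set" where
  "Bidx nA \<Omega> p = Inl ` (\<Union>l<nA. \<Omega> l) \<union> Inr ` {(l, i, t). l < nA \<and> i < p l}"

definition Bmap where
  "Bmap m n ar N Ec \<mu> \<nu> X c =
    (case c of Inl (a, b) \<Rightarrow> X a b
     | Inr (l, i, t) \<Rightarrow>
        (let z = Eapp Ec m ar n l l X i + (\<Sum>j\<in>N l. Eapp Ec m ar n l j X i)
         in sqrt (\<nu>/\<mu>) * (if t then Re z else Im z)))"

definition dvec where
  "dvec \<mu> \<nu> M f c =
    (case c of Inl (a, b) \<Rightarrow> M a b
     | Inr (l, i, t) \<Rightarrow> sqrt (\<nu>/\<mu>) * (if t then Re (f l i) else Im (f l i)))"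

text \<open>Adjoint B^*(z) = sum_c z_c B_c, where (B_c)_{ab} = [B(e_ab)]_c.\<close>
definition Badj where
  "Badj m n nA ar \<Omega> N Ec p \<mu> \<nu> z =
    (\<lambda>a b. if a < m \<and> b < n then
       (\<Sum>c\<in>Bidx nA \<Omega> p. z c * Bmap m n ar N Ec \<mu> \<nu> (\<lambda>a' b'. if a' = a \<and> b' = b then 1 else 0) c)
     else 0)"

definition NNobj where
  "NNobj m n nA ar \<Omega> N Ec p f \<mu> \<nu> M X =
    nuclear_norm m n X
    + \<mu>/2 * (\<Sum>c\<in>Bidx nA \<Omega> p. (Bmap m n ar N Ec \<mu> \<nu> X c - dvec \<mu> \<nu> M f c)\<^sup>2)"

end

theory Submission
  imports Defs "HOL-Analysis.Analysis"
begin

definition ip :: "nat \<Rightarrow> (nat \<Rightarrow> real) \<Rightarrow> (nat \<Rightarrow> real) \<Rightarrow> real" where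
  "ip N x y = (\<Sum>a<N. x a * y a)"

definition orthn :: "nat \<Rightarrow> nat \<Rightarrow> (nat \<Rightarrow> nat \<Rightarrow> real) \<Rightarrow> bool" where
  "orthn N k e \<longleftrightarrow> (\<forall>i<k. \<forall>j<k. ip N (e i) (e j) = (if i = j then 1 else 0))"

lemma ip_sym: "ip N x y = ip N y x"
  by (simp add: ip_def mult.commute)

lemma ip_self_nonneg: "0 \<le> ip N x x"
  by (simp add: ip_def sum_nonneg)

lemma ip_lincomb: "ip N x (\<lambda>a. \<Sum>i<k. c i * e i a) = (\<Sum>i<k. c i * ip N x (e i))"
  unfolding ip_def sum_distrib_left
  apply (subst sum.swap)
  apply (intro sum.cong refl)
  by (simp add: sum_distrib_left mult_ac)

lemma coef_extract:
  assumes "orthn N k e" "l < k"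
  shows "ip N (e l) (\<lambda>a. \<Sum>i<k. c i * e i a) = c l"
proof -
  have "ip N (e l) (\<lambda>a. \<Sum>i<k. c i * e i a) = (\<Sum>i<k. c i * (if l = i then 1 else 0))"
    unfolding ip_lincomb using assms unfolding orthn_def by (intro sum.cong) auto
  also have "... = (\<Sum>i<k. if i = l then c i else 0)" by (intro sum.cong) auto
  also have "... = c l" using assms by simp
  finally show ?thesis .
qed

lemma ip_delta:
  assumes "a < N"
  shows "ip N (\<lambda>b. if b = a then 1 else 0) y = y a"
proof -
  have "(\<Sum>b<N. (if b = a then 1 else 0) * y b) = (\<Sum>b<N. if b = a then y b else 0)"
    by (intro sum.cong) auto
  then show ?thesis using assms by (simp add: ip_def)
qed

lemma bessel:
  assumes "orthn N k e"
  shows "(\<Sum>i<k. (ip N x (e i))\<^sup>2) \<le> ip N x x"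
proof -
  define c where "c i = ip N x (e i)" for i
  define s where "s = (\<lambda>a. \<Sum>i<k. c i * e i a)"
  have "0 \<le> (\<Sum>a<N. (x a - s a)\<^sup>2)" by (simp add: sum_nonneg)
  also have "(\<Sum>a<N. (x a - s a)\<^sup>2) = (\<Sum>a<N. x a * x a - 2 * (x a * s a) + s a * s a)"
    by (intro sum.cong) (auto simp: power2_eq_square algebra_simps)
  also have "... = ip N x x - 2 * ip N x s + ip N s s"
    by (simp add: ip_def sum.distrib sum_subtractf sum_distrib_left)
  also have "ip N x s = (\<Sum>i<k. c i * c i)"
    unfolding s_def ip_lincomb c_def by simp
  also have "ip N s s = (\<Sum>i<k. c i * ip N s (e i))"
    by (subst (2) s_def) (simp add: ip_lincomb)
  also have "... = (\<Sum>i<k. c i * c i)"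
    using coef_extract[OF assms] unfolding s_def by (intro sum.cong) (auto simp: ip_sym)
  finally show ?thesis by (simp add: c_def power2_eq_square)
qed

lemma orthn_le:
  assumes "orthn N k e"
  shows "k \<le> N"
proof -
  define d where "d a = (\<lambda>b. if b = a then 1 else (0::real))" for a :: nat
  have dip: "ip N (d a) (e i) = e i a" if "a < N" for a i
  proof -
    have "(\<Sum>b<N. d a b * e i b) = (\<Sum>b<N. if b = a then e i b else 0)"
      by (intro sum.cong) (auto simp: d_def)
    then show ?thesis using that by (simp add: ip_def)
  qed
  have "real k = (\<Sum>i<k. ip N (e i) (e i))"
    using assms unfolding orthn_def by simp
  also have "... = (\<Sum>i<k. \<Sum>a<N. (e i a)\<^sup>2)"
    unfolding ip_def by (simp add: power2_eq_square)
  also have "... = (\<Sum>a<N. \<Sum>i<k. (e i a)\<^sup>2)"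
    by (rule sum.swap)
  also have "... = (\<Sum>a<N. \<Sum>i<k. (ip N (d a) (e i))\<^sup>2)"
    using dip by (intro sum.cong) auto
  also have "... \<le> (\<Sum>a<N. ip N (d a) (d a))"
    by (intro sum_mono bessel[OF assms])
  also have "... = real N"
  proof -
    have "ip N (d a) (d a) = 1" if "a < N" for a using ip_delta[OF that, of "d a"] that by (simp add: d_def)
    then show ?thesis by simp
  qed
  finally show ?thesis by simp
qed

definition sph :: "nat \<Rightarrow> (nat \<Rightarrow> real) set" where
  "sph N = {x. x \<in> PiE UNIV (\<lambda>a. if a < N then {-1..1} else {0}) \<and> ip N x x = 1}"

lemma cont_coord: "continuous_on S (\<lambda>x::nat\<Rightarrow>real. x i)"
  by (rule continuous_on_product_then_coordinatewise[OF continuous_on_id])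

lemma cont_coord_fst: "continuous_on S (\<lambda>p::(nat\<Rightarrow>real)\<times>(nat\<Rightarrow>real). fst p i)"
  by (rule continuous_on_product_then_coordinatewise[OF continuous_on_fst[OF continuous_on_id]])

lemma cont_coord_snd: "continuous_on S (\<lambda>p::(nat\<Rightarrow>real)\<times>(nat\<Rightarrow>real). snd p i)"
  by (rule continuous_on_product_then_coordinatewise[OF continuous_on_snd[OF continuous_on_id]])

lemma compact_sph: "compact (sph N)"
proof -
  have c1: "compact (PiE UNIV (\<lambda>a. if a < N then {-1..1::real} else {0}))"
  proof -
    have "compactin (product_topology (\<lambda>i. euclidean) UNIV) (PiE UNIV (\<lambda>a. if a < N then {-1..1::real} else {0}))"
      by (subst compactin_PiE) (auto simp: compactin_euclidean_iff)
    then show ?thesis by (simp add: euclidean_product_topology compactin_euclidean_iff)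
  qed
  have c2: "closed {x::nat\<Rightarrow>real. ip N x x = 1}"
    unfolding ip_def by (intro closed_Collect_eq continuous_intros cont_coord)
  have "sph N = PiE UNIV (\<lambda>a. if a < N then {-1..1::real} else {0}) \<inter> {x. ip N x x = 1}"
    unfolding sph_def by auto
  then show ?thesis using c1 c2 by (simp add: compact_Int_closed)
qed

lemma sq_le_ip: "a < N \<Longrightarrow> (w a)\<^sup>2 \<le> ip N w w"
proof -
  assume "a < N"
  then have "(\<Sum>b\<in>{a}. (w b)\<^sup>2) \<le> (\<Sum>b<N. (w b)\<^sup>2)"
    by (intro sum_mono2) auto
  then show ?thesis by (simp add: ip_def power2_eq_square)
qed

lemma ip_zero_imp: "ip N w w = 0 \<Longrightarrow> a < N \<Longrightarrow> w a = 0"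
  using sq_le_ip[of a N w] by simp

lemma align:
  assumes v1: "ip N v v = 1" and mx: "\<forall>v'\<in>sph N. ip N w v' \<le> ip N w v" and pos: "0 < ip N w v"
  shows "\<forall>b<N. w b = ip N w v * v b"
proof -
  define \<sigma> where "\<sigma> = ip N w v"
  have ww: "ip N w w \<noteq> 0"
  proof
    assume "ip N w w = 0"
    then have "\<forall>b<N. w b = 0" using ip_zero_imp by blast
    then have "ip N w v = 0" by (simp add: ip_def)
    then show False using pos by simp
  qed
  define s where "s = sqrt (ip N w w)"
  have spos: "s > 0" using ww ip_self_nonneg[of N w] by (simp add: s_def)
  have ss: "s * s = ip N w w" using ip_self_nonneg[of N w] by (simp add: s_def)
  define v' where "v' = (\<lambda>b. if b < N then w b / s else 0)"
  have ipv': "ip N v' v' = ip N w w / (s * s)"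
    unfolding ip_def v'_def by (simp add: sum_divide_distrib)
  have "v' \<in> sph N"
  proof -
    have "\<bar>w b\<bar> \<le> s" if "b < N" for b
      using sq_le_ip[OF that, of w] unfolding s_def by (simp add: real_le_rsqrt)
    then have "\<forall>b. v' b \<in> (if b < N then {-1..1} else {0})"
      using spos by (auto simp: v'_def divide_le_eq_1 abs_le_iff le_divide_eq) (smt (verit))
    then show ?thesis unfolding sph_def using ipv' ss ww by (auto simp: PiE_def extensional_def)
  qed
  then have "ip N w v' \<le> \<sigma>" using mx \<sigma>_def by blast
  moreover have "ip N w v' = ip N w w / s"
    unfolding ip_def v'_def by (simp add: sum_divide_distrib)
  ultimately have "s * s \<le> \<sigma> * s" using ss spos by (simp add: divide_le_eq)
  then have "s \<le> \<sigma>" using spos by (rule mult_right_le_imp_le)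
  have "(\<Sum>b<N. (w b - \<sigma> * v b)\<^sup>2) = (\<Sum>b<N. w b * w b - 2 * \<sigma> * (w b * v b) + \<sigma> * \<sigma> * (v b * v b))"
    by (intro sum.cong) (auto simp: power2_eq_square algebra_simps)
  also have "... = ip N w w - 2 * \<sigma> * ip N w v + \<sigma> * \<sigma> * ip N v v"
    by (simp add: ip_def sum.distrib sum_subtractf sum_distrib_left)
  also have "... = s * s - \<sigma> * \<sigma>" using v1 ss \<sigma>_def by simp
  also have "... \<le> 0" using \<open>s \<le> \<sigma>\<close> spos by (simp add: mult_mono)
  finally have le0: "(\<Sum>b<N. (w b - \<sigma> * v b)\<^sup>2) \<le> 0" .
  show ?thesis
  proof (intro allI impI)
    fix b assume "b < N"
    have "(\<Sum>b\<in>{b}. (w b - \<sigma> * v b)\<^sup>2) \<le> (\<Sum>b<N. (w b - \<sigma> * v b)\<^sup>2)"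
      using \<open>b < N\<close> by (intro sum_mono2) auto
    moreover have "(\<Sum>b\<in>{b}. (w b - \<sigma> * v b)\<^sup>2) = (w b - \<sigma> * v b)\<^sup>2" by simp
    ultimately have "(w b - \<sigma> * v b)\<^sup>2 \<le> 0" using le0 by linarith
    then have "w b - \<sigma> * v b = 0" by (simp add: power2_eq_square mult_le_0_iff) linarith
    then show "w b = ip N w v * v b" unfolding \<sigma>_def by simp
  qed
qed

lemma top_pair:
  assumes "a0 < m" "b0 < n" "X a0 b0 \<noteq> 0"
  shows "\<exists>\<sigma> u v. \<sigma> > 0 \<and> ip m u u = 1 \<and> ip n v v = 1 \<and>
     (\<forall>a<m. (\<Sum>b<n. X a b * v b) = \<sigma> * u a) \<and> (\<forall>b<n. (\<Sum>a<m. u a * X a b) = \<sigma> * v b)"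
proof -
  define F where "F p = (\<Sum>a<m. \<Sum>b<n. fst p a * X a b * snd p b)" for p :: "(nat\<Rightarrow>real)\<times>(nat\<Rightarrow>real)"
  define K where "K = sph m \<times> sph n"
  define u0 where "u0 = (\<lambda>a. if a = a0 then sgn (X a0 b0) else 0)"
  define v0 where "v0 = (\<lambda>b. if b = b0 then 1 else (0::real))"
  have u0s: "u0 \<in> sph m"
  proof -
    have "ip m u0 u0 = (\<Sum>a<m. if a = a0 then sgn (X a0 b0) * sgn (X a0 b0) else 0)"
      unfolding ip_def u0_def by (intro sum.cong) auto
    also have "... = 1" using assms by (simp add: sgn_if)
    finally show ?thesis unfolding sph_def u0_def using assms by (auto simp: PiE_def extensional_def sgn_if)
  qed
  have v0s: "v0 \<in> sph n"
  proof -
    have "ip n v0 v0 = (\<Sum>b<n. if b = b0 then 1 else 0)"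
      unfolding ip_def v0_def by (intro sum.cong) auto
    also have "... = 1" using assms by simp
    finally show ?thesis unfolding sph_def v0_def using assms by (auto simp: PiE_def extensional_def)
  qed
  have "compact K" unfolding K_def by (intro compact_Times compact_sph)
  moreover have "K \<noteq> {}" using u0s v0s K_def by auto
  moreover have "continuous_on K F"
    unfolding F_def by (intro continuous_intros cont_coord_fst cont_coord_snd)
  ultimately obtain p where pK: "p \<in> K" and pmax: "\<forall>y\<in>K. F y \<le> F p"
    using continuous_attains_sup by blast
  define u where "u = fst p"
  define v where "v = snd p"
  have us: "u \<in> sph m" and vs: "v \<in> sph n" using pK K_def u_def v_def by auto
  define wv where "wv b = (\<Sum>a<m. u a * X a b)" for b
  define wu where "wu a = (\<Sum>b<n. X a b * v b)" for a
  have Fv: "F (u, v') = ip n wv v'" for v'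
    unfolding F_def wv_def ip_def
    by (simp add: sum_distrib_right sum.swap[of _ "{..<m}"])
  have Fu: "F (u', v) = ip m wu u'" for u'
    unfolding F_def wu_def ip_def
    by (simp add: sum_distrib_left mult_ac)
  have Fp: "F p = ip n wv v" using Fv[of v] u_def v_def by simp
  have "F (u0, v0) = (\<Sum>a<m. if a = a0 then sgn (X a0 b0) * X a0 b0 else 0)"
    unfolding F_def
  proof (intro sum.cong refl)
    fix a assume "a \<in> {..<m}"
    have "(\<Sum>b<n. fst (u0, v0) a * X a b * snd (u0, v0) b) = (\<Sum>b<n. if b = b0 then u0 a * X a b0 else 0)"
      by (intro sum.cong) (auto simp: v0_def)
    also have "... = u0 a * X a b0" using assms by simp
    finally show "(\<Sum>b<n. fst (u0, v0) a * X a b * snd (u0, v0) b) = (if a = a0 then sgn (X a0 b0) * X a0 b0 else 0)"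
      by (simp add: u0_def)
  qed
  also have "... = \<bar>X a0 b0\<bar>" using assms by (simp add: sgn_if abs_if)
  finally have "F (u0, v0) > 0" using assms by simp
  moreover have "F (u0, v0) \<le> F p" using pmax u0s v0s K_def by auto
  ultimately have Fpos: "F p > 0" by simp
  have A: "\<forall>b<n. wv b = ip n wv v * v b"
  proof (rule align)
    show "ip n v v = 1" using vs sph_def by auto
    show "\<forall>v'\<in>sph n. ip n wv v' \<le> ip n wv v"
      using pmax us K_def Fv Fp u_def by (metis SigmaI prod.collapse)
    show "0 < ip n wv v" using Fpos Fp by simp
  qed
  have Fp': "F p = ip m wu u" using Fu[of u] u_def v_def by simp
  have B: "\<forall>a<m. wu a = ip m wu u * u a"
  proof (rule align)
    show "ip m u u = 1" using us sph_def by auto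
    show "\<forall>u'\<in>sph m. ip m wu u' \<le> ip m wu u"
      using pmax vs K_def Fu Fp' v_def by (metis SigmaI)
    show "0 < ip m wu u" using Fpos Fp' by simp
  qed
  show ?thesis
    apply (rule exI[of _ "F p"], rule exI[of _ u], rule exI[of _ v])
    using Fpos us vs A B Fp Fp' unfolding sph_def wu_def wv_def by auto
qed

lemma csvd_iff: "is_csvd m n X k \<sigma> u v \<longleftrightarrow> (\<forall>i<k. \<sigma> i > 0) \<and> orthn m k u \<and> orthn n k v \<and>
     (\<forall>a<m. \<forall>b<n. X a b = (\<Sum>i<k. \<sigma> i * u i a * v i b))"
  unfolding is_csvd_def orthn_def ip_def by simp

lemma L_apply:
  assumes "\<forall>a<m. \<forall>b<n. X a b = (\<Sum>i<k. \<sigma> i * u i a * v i b)" "a < m"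
  shows "(\<Sum>b<n. X a b * w b) = (\<Sum>i<k. \<sigma> i * u i a * ip n (v i) w)"
proof -
  have "(\<Sum>b<n. X a b * w b) = (\<Sum>b<n. \<Sum>i<k. \<sigma> i * u i a * (v i b * w b))"
    using assms by (intro sum.cong) (auto simp: sum_distrib_right sum_distrib_left mult_ac)
  also have "... = (\<Sum>i<k. \<Sum>b<n. \<sigma> i * u i a * (v i b * w b))" by (rule sum.swap)
  also have "... = (\<Sum>i<k. \<sigma> i * u i a * ip n (v i) w)"
    by (simp add: ip_def sum_distrib_left)
  finally show ?thesis .
qed

lemma L_applyT:
  assumes "\<forall>a<m. \<forall>b<n. X a b = (\<Sum>i<k. \<sigma> i * u i a * v i b)" "b < n"
  shows "(\<Sum>a<m. w a * X a b) = (\<Sum>i<k. \<sigma> i * ip m w (u i) * v i b)"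
proof -
  have "(\<Sum>a<m. w a * X a b) = (\<Sum>a<m. \<Sum>i<k. \<sigma> i * v i b * (w a * u i a))"
    using assms by (intro sum.cong) (auto simp: sum_distrib_left mult_ac)
  also have "... = (\<Sum>i<k. \<Sum>a<m. \<sigma> i * v i b * (w a * u i a))" by (rule sum.swap)
  also have "... = (\<Sum>i<k. \<sigma> i * ip m w (u i) * v i b)"
  proof (intro sum.cong refl)
    fix i show "(\<Sum>a<m. \<sigma> i * v i b * (w a * u i a)) = \<sigma> i * ip m w (u i) * v i b"
      by (simp add: ip_def sum_distrib_left mult_ac)
  qed
  finally show ?thesis .
qed

lemma svd_aux:
  "n - j = d \<Longrightarrow> orthn n j e \<Longrightarrow> (\<forall>i<j. \<forall>a<m. (\<Sum>b<n. X a b * e i b) = 0)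
   \<Longrightarrow> \<exists>k \<sigma> u v. is_csvd m n X k \<sigma> u v"
proof (induction d arbitrary: j e X rule: less_induct)
  case (less d)
  show ?case
  proof (cases "\<exists>a<m. \<exists>b<n. X a b \<noteq> 0")
    case False
    then have "is_csvd m n X 0 (\<lambda>_. 1) (\<lambda>_ _. 0) (\<lambda>_ _. 0)" by (simp add: is_csvd_def)
    then show ?thesis by blast
  next
    case True
    then obtain a0 b0 where ab: "a0 < m" "b0 < n" "X a0 b0 \<noteq> 0" by blast
    obtain \<sigma> u v where sp: "\<sigma> > 0" and uu: "ip m u u = 1" and vv: "ip n v v = 1"
      and Xv: "\<forall>a<m. (\<Sum>b<n. X a b * v b) = \<sigma> * u a"
      and Xu: "\<forall>b<n. (\<Sum>a<m. u a * X a b) = \<sigma> * v b"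
      using top_pair[of a0 m b0 n X, OF ab] by blast
    have ve: "ip n (e i) v = 0" if "i < j" for i
    proof -
      have "\<sigma> * ip n (e i) v = (\<Sum>b<n. e i b * (\<Sum>a<m. u a * X a b))"
        unfolding ip_def using Xu by (simp add: sum_distrib_left mult_ac)
      also have "... = (\<Sum>b<n. \<Sum>a<m. u a * (X a b * e i b))"
        by (simp add: sum_distrib_left mult_ac)
      also have "... = (\<Sum>a<m. \<Sum>b<n. u a * (X a b * e i b))" by (rule sum.swap)
      also have "... = (\<Sum>a<m. u a * (\<Sum>b<n. X a b * e i b))" by (simp add: sum_distrib_left)
      also have "... = 0" using less.prems(3) that by simp
      finally show ?thesis using sp by simp
    qed
    define e' where "e' = e(j := v)"
    have orth': "orthn n (Suc j) e'"
      unfolding orthn_def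
    proof (intro allI impI)
      fix i i' assume "i < Suc j" "i' < Suc j"
      then show "ip n (e' i) (e' i') = (if i = i' then 1 else 0)"
        using less.prems(2) ve vv unfolding orthn_def e'_def
        by (cases "i = j"; cases "i' = j") (auto simp: ip_sym less_Suc_eq)
    qed
    define X' where "X' a b = X a b - \<sigma> * u a * v b" for a b
    have app': "(\<Sum>b<n. X' a b * w b) = (\<Sum>b<n. X a b * w b) - \<sigma> * u a * ip n v w" for a w
      unfolding X'_def ip_def by (simp add: algebra_simps sum_subtractf sum_distrib_left)
    have kill: "\<forall>i<Suc j. \<forall>a<m. (\<Sum>b<n. X' a b * e' i b) = 0"
    proof (intro allI impI)
      fix i a assume i: "i < Suc j" and a: "a < m"
      show "(\<Sum>b<n. X' a b * e' i b) = 0"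
      proof (cases "i = j")
        case True
        then show ?thesis using app' Xv a vv by (simp add: e'_def)
      next
        case False
        then have "i < j" using i by simp
        then show ?thesis using app' less.prems(3) a ve[of i] False by (simp add: e'_def ip_sym)
      qed
    qed
    have "Suc j \<le> n" using orthn_le[OF orth'] .
    then have "n - Suc j < d" using less.prems(1) by simp
    then obtain k \<sigma>' u' v' where cs: "is_csvd m n X' k \<sigma>' u' v'"
      using less.IH[OF _ refl orth' kill] by blast
    have sp': "\<forall>i<k. \<sigma>' i > 0" and ou': "orthn m k u'" and ov': "orthn n k v'"
      and rep: "\<forall>a<m. \<forall>b<n. X' a b = (\<Sum>i<k. \<sigma>' i * u' i a * v' i b)"
      using cs unfolding csvd_iff by auto
    have v'v: "ip n (v' l) v = 0" if "l < k" for l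
    proof -
      have "(\<Sum>i<k. \<sigma>' i * u' i a * ip n (v' i) v) = 0" if "a < m" for a
        using L_apply[OF rep that, of v] kill[rule_format, of j a] that by (simp add: e'_def)
      then have "ip m (u' l) (\<lambda>a. \<Sum>i<k. (\<sigma>' i * ip n (v' i) v) * u' i a) = 0"
        unfolding ip_def by (simp add: mult_ac)
      then have "\<sigma>' l * ip n (v' l) v = 0" using coef_extract[OF ou' that] by simp
      then show ?thesis using sp' that by force
    qed
    have u'u: "ip m u (u' l) = 0" if "l < k" for l
    proof -
      have "(\<Sum>a<m. u a * X' a b) = 0" if "b < n" for b
      proof -
        have "(\<Sum>a<m. u a * X' a b) = (\<Sum>a<m. u a * X a b) - \<sigma> * v b * ip m u u"
          unfolding X'_def ip_def by (simp add: algebra_simps sum_subtractf sum_distrib_left)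
        then show ?thesis using Xu uu that by simp
      qed
      then have "(\<Sum>i<k. \<sigma>' i * ip m u (u' i) * v' i b) = 0" if "b < n" for b
        using L_applyT[OF rep that, of u] that by simp
      then have "ip n (v' l) (\<lambda>b. \<Sum>i<k. (\<sigma>' i * ip m u (u' i)) * v' i b) = 0"
        unfolding ip_def by (simp add: mult_ac)
      then have "\<sigma>' l * ip m u (u' l) = 0" using coef_extract[OF ov' that] by simp
      then show ?thesis using sp' that by force
    qed
    have "is_csvd m n X (Suc k) (\<sigma>'(k := \<sigma>)) (u'(k := u)) (v'(k := v))"
      unfolding csvd_iff
    proof (intro conjI)
      show "\<forall>i<Suc k. 0 < (\<sigma>'(k := \<sigma>)) i" using sp sp' by (auto simp: less_Suc_eq)
      show "orthn m (Suc k) (u'(k := u))"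
        unfolding orthn_def
      proof (intro allI impI)
        fix i i' assume "i < Suc k" "i' < Suc k"
        then show "ip m ((u'(k := u)) i) ((u'(k := u)) i') = (if i = i' then 1 else 0)"
          using ou' u'u uu unfolding orthn_def
          by (cases "i = k"; cases "i' = k") (auto simp: ip_sym less_Suc_eq)
      qed
      show "orthn n (Suc k) (v'(k := v))"
        unfolding orthn_def
      proof (intro allI impI)
        fix i i' assume "i < Suc k" "i' < Suc k"
        then show "ip n ((v'(k := v)) i) ((v'(k := v)) i') = (if i = i' then 1 else 0)"
          using ov' v'v vv unfolding orthn_def
          by (cases "i = k"; cases "i' = k") (auto simp: ip_sym less_Suc_eq)
      qed
      show "\<forall>a<m. \<forall>b<n. X a b = (\<Sum>i<Suc k. (\<sigma>'(k := \<sigma>)) i * (u'(k := u)) i a * (v'(k := v)) i b)"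
      proof (intro allI impI)
        fix a b assume "a < m" "b < n"
        have "(\<Sum>i<k. (\<sigma>'(k := \<sigma>)) i * (u'(k := u)) i a * (v'(k := v)) i b) = (\<Sum>i<k. \<sigma>' i * u' i a * v' i b)"
          by (intro sum.cong) auto
        then show "X a b = (\<Sum>i<Suc k. (\<sigma>'(k := \<sigma>)) i * (u'(k := u)) i a * (v'(k := v)) i b)"
          using rep[rule_format, OF \<open>a < m\<close> \<open>b < n\<close>] by (simp add: X'_def algebra_simps)
      qed
    qed
    then show ?thesis by blast
  qed
qed

lemma svd_exists: "\<exists>k \<sigma> u v. is_csvd m n X k \<sigma> u v"
  by (rule svd_aux[of n 0 "n" "\<lambda>_ _. 0"]) (auto simp: orthn_def)

lemma nuc_ex: "\<exists>k \<sigma> u v. is_csvd m n X k \<sigma> u v \<and> nuclear_norm m n X = (\<Sum>i<k. \<sigma> i)"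
proof -
  have "\<exists>s. \<exists>k \<sigma> u v. is_csvd m n X k \<sigma> u v \<and> s = (\<Sum>i<k. \<sigma> i)"
    using svd_exists[of m n X] by blast
  from someI_ex[OF this] show ?thesis unfolding nuclear_norm_def by blast
qed

lemma spec_ex: "\<exists>k \<sigma> u v. is_csvd m n X k \<sigma> u v \<and> spectral_norm m n X = Max (insert 0 (\<sigma> ` {..<k}))"
proof -
  have "\<exists>s. \<exists>k \<sigma> u v. is_csvd m n X k \<sigma> u v \<and> s = Max (insert 0 (\<sigma> ` {..<k}))"
    using svd_exists[of m n X] by blast
  from someI_ex[OF this] show ?thesis unfolding spectral_norm_def by blast
qed

lemma amgm: "\<bar>a * b\<bar> \<le> (a\<^sup>2 + b\<^sup>2) / (2::real)"
proof -
  have "0 \<le> (\<bar>a\<bar> - \<bar>b\<bar>)\<^sup>2" by simp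
  then show ?thesis by (simp add: power2_eq_square abs_mult algebra_simps)
qed

lemma bil_rep:
  assumes "\<forall>a<m. \<forall>b<n. G a b = (\<Sum>j<k. s j * c j a * e j b)"
  shows "(\<Sum>a<m. \<Sum>b<n. x a * G a b * y b) = (\<Sum>j<k. s j * ip m x (c j) * ip n (e j) y)"
proof -
  have "(\<Sum>a<m. \<Sum>b<n. x a * G a b * y b) = (\<Sum>a<m. x a * (\<Sum>b<n. G a b * y b))"
    by (simp add: sum_distrib_left mult_ac)
  also have "... = (\<Sum>a<m. x a * (\<Sum>j<k. s j * c j a * ip n (e j) y))"
    using L_apply[OF assms] by simp
  also have "... = (\<Sum>a<m. \<Sum>j<k. s j * ip n (e j) y * (x a * c j a))"
    by (simp add: sum_distrib_left mult_ac)
  also have "... = (\<Sum>j<k. \<Sum>a<m. s j * ip n (e j) y * (x a * c j a))" by (rule sum.swap)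
  also have "... = (\<Sum>j<k. s j * ip m x (c j) * ip n (e j) y)"
  proof (intro sum.cong refl)
    fix j show "(\<Sum>a<m. s j * ip n (e j) y * (x a * c j a)) = s j * ip m x (c j) * ip n (e j) y"
      by (simp add: ip_def[of m] sum_distrib_left mult_ac)
  qed
  finally show ?thesis .
qed

lemma bil_bound:
  assumes cs: "is_csvd m n G k s c e" and s1: "\<forall>j<k. s j \<le> 1"
    and x1: "ip m x x = 1" and y1: "ip n y y = 1"
  shows "\<bar>\<Sum>a<m. \<Sum>b<n. x a * G a b * y b\<bar> \<le> 1"
proof -
  have sp: "\<forall>j<k. s j > 0" and oc: "orthn m k c" and oe: "orthn n k e"
    and rep: "\<forall>a<m. \<forall>b<n. G a b = (\<Sum>j<k. s j * c j a * e j b)"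
    using cs unfolding csvd_iff by auto
  have "\<bar>\<Sum>a<m. \<Sum>b<n. x a * G a b * y b\<bar> = \<bar>\<Sum>j<k. s j * ip m x (c j) * ip n (e j) y\<bar>"
    using bil_rep[OF rep] by simp
  also have "... \<le> (\<Sum>j<k. \<bar>s j * ip m x (c j) * ip n (e j) y\<bar>)" by (rule sum_abs)
  also have "... \<le> (\<Sum>j<k. \<bar>ip m x (c j) * ip n y (e j)\<bar>)"
  proof (intro sum_mono)
    fix j assume "j \<in> {..<k}"
    then have "0 < s j" "s j \<le> 1" using sp s1 by auto
    then show "\<bar>s j * ip m x (c j) * ip n (e j) y\<bar> \<le> \<bar>ip m x (c j) * ip n y (e j)\<bar>"
      by (simp add: abs_mult ip_sym mult_left_le_one_le mult.assoc)
  qed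
  also have "... \<le> (\<Sum>j<k. ((ip m x (c j))\<^sup>2 + (ip n y (e j))\<^sup>2) / 2)"
    by (intro sum_mono amgm)
  also have "... = ((\<Sum>j<k. (ip m x (c j))\<^sup>2) + (\<Sum>j<k. (ip n y (e j))\<^sup>2)) / 2"
    by (simp add: add_divide_distrib sum.distrib sum_divide_distrib[symmetric])
  also have "... \<le> (1 + 1) / 2"
    using bessel[OF oc, of x] bessel[OF oe, of y] x1 y1 by (intro divide_right_mono add_mono) auto
  finally show ?thesis by simp
qed

lemma frob_rep:
  fixes G X :: "nat \<Rightarrow> nat \<Rightarrow> real"
  assumes "\<forall>a<m. \<forall>b<n. X a b = (\<Sum>i<k. \<sigma> i * u i a * v i b)"
  shows "(\<Sum>a<m. \<Sum>b<n. G a b * X a b) = (\<Sum>i<k. \<sigma> i * (\<Sum>a<m. \<Sum>b<n. u i a * G a b * v i b))"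
proof -
  have "(\<Sum>a<m. \<Sum>b<n. G a b * X a b) = (\<Sum>a<m. \<Sum>b<n. \<Sum>i<k. \<sigma> i * (u i a * G a b * v i b))"
  proof (intro sum.cong refl)
    fix a b assume "a \<in> {..<m}" "b \<in> {..<n}"
    then have "X a b = (\<Sum>i<k. \<sigma> i * u i a * v i b)" using assms by simp
    moreover have "G a b * (\<Sum>i<k. \<sigma> i * u i a * v i b) = (\<Sum>i<k. \<sigma> i * (u i a * G a b * v i b))"
      unfolding sum_distrib_left by (intro sum.cong) (auto simp: mult_ac)
    ultimately show "G a b * X a b = (\<Sum>i<k. \<sigma> i * (u i a * G a b * v i b))" by simp
  qed
  also have "... = (\<Sum>i<k. \<Sum>a<m. \<Sum>b<n. \<sigma> i * (u i a * G a b * v i b))"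
    by (simp add: sum.swap[of _ "{..<k}"])
  also have "... = (\<Sum>i<k. \<sigma> i * (\<Sum>a<m. \<Sum>b<n. u i a * G a b * v i b))"
    by (simp add: sum_distrib_left)
  finally show ?thesis .
qed

lemma nuc_lower:
  assumes "spectral_norm m n G \<le> 1"
  shows "\<bar>\<Sum>a<m. \<Sum>b<n. G a b * X a b\<bar> \<le> nuclear_norm m n X"
proof -
  obtain k \<sigma> u v where csX: "is_csvd m n X k \<sigma> u v" and nX: "nuclear_norm m n X = (\<Sum>i<k. \<sigma> i)"
    using nuc_ex by blast
  obtain k' s c e where csG: "is_csvd m n G k' s c e" and sG: "spectral_norm m n G = Max (insert 0 (s ` {..<k'}))"
    using spec_ex by blast
  have s1: "\<forall>j<k'. s j \<le> 1"
  proof (intro allI impI)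
    fix j assume "j < k'"
    then have "s j \<le> Max (insert 0 (s ` {..<k'}))" by (intro Max_ge) auto
    then show "s j \<le> 1" using assms sG by linarith
  qed
  have sp: "\<forall>i<k. \<sigma> i > 0" and ou: "orthn m k u" and ov: "orthn n k v"
    and rep: "\<forall>a<m. \<forall>b<n. X a b = (\<Sum>i<k. \<sigma> i * u i a * v i b)"
    using csX unfolding csvd_iff by auto
  have "\<bar>\<Sum>a<m. \<Sum>b<n. G a b * X a b\<bar> = \<bar>\<Sum>i<k. \<sigma> i * (\<Sum>a<m. \<Sum>b<n. u i a * G a b * v i b)\<bar>"
    using frob_rep[OF rep] by simp
  also have "... \<le> (\<Sum>i<k. \<bar>\<sigma> i * (\<Sum>a<m. \<Sum>b<n. u i a * G a b * v i b)\<bar>)" by (rule sum_abs)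
  also have "... \<le> (\<Sum>i<k. \<sigma> i)"
  proof (intro sum_mono)
    fix i assume i: "i \<in> {..<k}"
    have "ip m (u i) (u i) = 1" "ip n (v i) (v i) = 1" using ou ov i unfolding orthn_def by auto
    then have "\<bar>\<Sum>a<m. \<Sum>b<n. u i a * G a b * v i b\<bar> \<le> 1" using bil_bound[OF csG s1] by blast
    then show "\<bar>\<sigma> i * (\<Sum>a<m. \<Sum>b<n. u i a * G a b * v i b)\<bar> \<le> \<sigma> i"
    proof -
      have "\<sigma> i > 0" using sp i by simp
      then show ?thesis using \<open>\<bar>\<Sum>a<m. \<Sum>b<n. u i a * G a b * v i b\<bar> \<le> 1\<close>
        by (simp add: abs_mult mult_left_le)
    qed
  qed
  finally show ?thesis using nX by simp
qed

lemma nuc_upper: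
  assumes "\<forall>a<m. \<forall>b<n. X a b = (\<Sum>k<r. U a k * V k b)"
  shows "nuclear_norm m n X \<le> ((\<Sum>a<m. \<Sum>k<r. (U a k)\<^sup>2) + (\<Sum>k<r. \<Sum>b<n. (V k b)\<^sup>2)) / 2"
proof -
  obtain K \<sigma> u v where csX: "is_csvd m n X K \<sigma> u v" and nX: "nuclear_norm m n X = (\<Sum>i<K. \<sigma> i)"
    using nuc_ex by blast
  have sp: "\<forall>i<K. \<sigma> i > 0" and ou: "orthn m K u" and ov: "orthn n K v"
    and rep: "\<forall>a<m. \<forall>b<n. X a b = (\<Sum>i<K. \<sigma> i * u i a * v i b)"
    using csX unfolding csvd_iff by auto
  define \<alpha> where "\<alpha> i k = ip m (\<lambda>a. U a k) (u i)" for i k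
  define \<beta> where "\<beta> i k = ip n (\<lambda>b. V k b) (v i)" for i k
  have sig: "\<sigma> i = (\<Sum>k<r. \<alpha> i k * \<beta> i k)" if "i < K" for i
  proof -
    have "(\<Sum>a<m. \<Sum>b<n. u i a * X a b * v i b) = (\<Sum>j<K. \<sigma> j * ip m (u i) (u j) * ip n (v j) (v i))"
      using bil_rep[OF rep] by simp
    also have "... = (\<Sum>j<K. if j = i then \<sigma> i else 0)"
      using ou ov that unfolding orthn_def by (intro sum.cong) (auto simp: ip_sym)
    also have "... = \<sigma> i" using that by simp
    finally have e1: "(\<Sum>a<m. \<Sum>b<n. u i a * X a b * v i b) = \<sigma> i" .
    have "(\<Sum>a<m. \<Sum>b<n. u i a * X a b * v i b) = (\<Sum>a<m. \<Sum>b<n. \<Sum>k<r. (U a k * u i a) * (V k b * v i b))"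
      using assms by (intro sum.cong refl) (auto simp: sum_distrib_left sum_distrib_right mult_ac)
    also have "... = (\<Sum>k<r. \<Sum>a<m. \<Sum>b<n. (U a k * u i a) * (V k b * v i b))"
      by (simp add: sum.swap[of _ "{..<r}"])
    also have "... = (\<Sum>k<r. \<alpha> i k * \<beta> i k)"
      by (simp add: \<alpha>_def \<beta>_def ip_def sum_product)
    finally show ?thesis using e1 by simp
  qed
  have "(\<Sum>i<K. \<sigma> i) = (\<Sum>i<K. \<Sum>k<r. \<alpha> i k * \<beta> i k)" using sig by simp
  also have "... \<le> (\<Sum>i<K. \<Sum>k<r. ((\<alpha> i k)\<^sup>2 + (\<beta> i k)\<^sup>2) / 2)"
    by (intro sum_mono) (meson abs_le_D1 amgm order_trans)
  also have "... = ((\<Sum>i<K. \<Sum>k<r. (\<alpha> i k)\<^sup>2) + (\<Sum>i<K. \<Sum>k<r. (\<beta> i k)\<^sup>2)) / 2"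
    by (simp add: add_divide_distrib sum.distrib sum_divide_distrib[symmetric])
  also have "... = ((\<Sum>k<r. \<Sum>i<K. (\<alpha> i k)\<^sup>2) + (\<Sum>k<r. \<Sum>i<K. (\<beta> i k)\<^sup>2)) / 2"
    by (simp add: sum.swap[of _ "{..<K}"])
  also have "... \<le> ((\<Sum>k<r. ip m (\<lambda>a. U a k) (\<lambda>a. U a k)) + (\<Sum>k<r. ip n (\<lambda>b. V k b) (\<lambda>b. V k b))) / 2"
    unfolding \<alpha>_def \<beta>_def using bessel[OF ou] bessel[OF ov]
    by (intro divide_right_mono add_mono sum_mono) auto
  also have "... = ((\<Sum>a<m. \<Sum>k<r. (U a k)\<^sup>2) + (\<Sum>k<r. \<Sum>b<n. (V k b)\<^sup>2)) / 2"
    by (simp add: ip_def power2_eq_square sum.swap[of _ "{..<r}"])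
  finally show ?thesis using nX by simp
qed

lemma D1: "((\<lambda>t. (x + t*y)\<^sup>2) has_real_derivative 2*x*y) (at 0)"
  by (auto intro!: derivative_eq_intros)

lemma D2: "((\<lambda>t. (x + t*y + t\<^sup>2*z)\<^sup>2) has_real_derivative 2*x*y) (at 0)"
  by (auto intro!: derivative_eq_intros)

lemma D3: "((\<lambda>t. (cmod (z0 + complex_of_real t * z1 + complex_of_real (t\<^sup>2) * z2))\<^sup>2) has_real_derivative 2 * Re (cnj z0 * z1)) (at 0)"
proof -
  have e: "(cmod (z0 + complex_of_real t * z1 + complex_of_real (t\<^sup>2) * z2))\<^sup>2 =
     (Re z0 + t * Re z1 + t\<^sup>2 * Re z2)\<^sup>2 + (Im z0 + t * Im z1 + t\<^sup>2 * Im z2)\<^sup>2" for t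
    by (simp add: cmod_power2)
  have "((\<lambda>t. (Re z0 + t * Re z1 + t\<^sup>2 * Re z2)\<^sup>2 + (Im z0 + t * Im z1 + t\<^sup>2 * Im z2)\<^sup>2) has_real_derivative
      2 * Re z0 * Re z1 + 2 * Im z0 * Im z1) (at 0)"
    by (intro DERIV_add D2)
  then show ?thesis unfolding e by (simp add: mult.assoc)
qed

lemma D4: "((\<lambda>t. Re (w * (z0 + complex_of_real t * z1 + complex_of_real (t\<^sup>2) * z2))) has_real_derivative Re (w * z1)) (at 0)"
proof -
  have e: "Re (w * (z0 + complex_of_real t * z1 + complex_of_real (t\<^sup>2) * z2)) =
     Re (w * z0) + t * Re (w * z1) + t\<^sup>2 * Re (w * z2)" for t
    by (simp add: algebra_simps)
  show ?thesis unfolding e by (auto intro!: derivative_eq_intros)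
qed

lemma D6: "((\<lambda>t. c * (x + t * y - (z + t * w))) has_real_derivative c * (y - w)) (at 0)"
  by (auto intro!: derivative_eq_intros)

lemma prod_path:
  "prodUV r (\<lambda>l a k. U l a k + t * dU l a k) (\<lambda>l k b. V l k b + t * dV l k b) l =
   (\<lambda>a b. prodUV r U V l a b + t * (prodUV r dU V l a b + prodUV r U dV l a b) + t\<^sup>2 * prodUV r dU dV l a b)"
  unfolding prodUV_def
  by (intro ext) (simp add: algebra_simps sum.distrib sum_distrib_left power2_eq_square)

lemma Eapp_path:
  "Eapp Ec m ar n l k (\<lambda>a b. A a b + t * B a b + t\<^sup>2 * C a b) i =
   Eapp Ec m ar n l k A i + complex_of_real t * Eapp Ec m ar n l k B i + complex_of_real (t\<^sup>2) * Eapp Ec m ar n l k C i"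
  unfolding Eapp_def
  by (simp add: algebra_simps sum.distrib sum_distrib_left)

lemma D2m: "((\<lambda>t. (x + t*y + t\<^sup>2*z - w)\<^sup>2) has_real_derivative 2*(x - w)*y) (at 0)"
  by (auto intro!: derivative_eq_intros)

lemma pieceB:
  "((\<lambda>t. (prodUV r (\<lambda>l a k. U l a k + t * dU l a k) (\<lambda>l k b. V l k b + t * dV l k b) l a b - M a b)\<^sup>2)
     has_real_derivative 2 * (prodUV r U V l a b - M a b) * (prodUV r dU V l a b + prodUV r U dV l a b)) (at 0)"
  unfolding prod_path by (rule D2m)

lemma pieceBsum:
  "((\<lambda>t. \<mu>/2 * (\<Sum>(a,b)\<in>\<Omega>. (prodUV r (\<lambda>l a k. U l a k + t * dU l a k) (\<lambda>l k b. V l k b + t * dV l k b) l a b - M a b)\<^sup>2))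
     has_real_derivative \<mu>/2 * (\<Sum>(a,b)\<in>\<Omega>. 2 * (prodUV r U V l a b - M a b) * (prodUV r dU V l a b + prodUV r U dV l a b))) (at 0)"
  apply (rule DERIV_cmult)
  apply (rule DERIV_sum)
  subgoal for x by (cases x) (simp only: prod.case pieceB)
  done

lemma pieceC:
  "((\<lambda>t. (cmod (Eapp Ec m ar n l l (prodUV r (\<lambda>l a k. U l a k + t * dU l a k) (\<lambda>l k b. V l k b + t * dV l k b) l) i
        + (\<Sum>j\<in>N l. q l j i + complex_of_real t * dq l j i) - f l i))\<^sup>2)
     has_real_derivative 2 * Re (cnj (Eapp Ec m ar n l l (prodUV r U V l) i + (\<Sum>j\<in>N l. q l j i) - f l i)
        * (Eapp Ec m ar n l l (\<lambda>a b. prodUV r dU V l a b + prodUV r U dV l a b) i + (\<Sum>j\<in>N l. dq l j i)))) (at 0)"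
proof -
  have e: "Eapp Ec m ar n l l (prodUV r (\<lambda>l a k. U l a k + t * dU l a k) (\<lambda>l k b. V l k b + t * dV l k b) l) i
        + (\<Sum>j\<in>N l. q l j i + complex_of_real t * dq l j i) - f l i =
     (Eapp Ec m ar n l l (prodUV r U V l) i + (\<Sum>j\<in>N l. q l j i) - f l i)
     + complex_of_real t * (Eapp Ec m ar n l l (\<lambda>a b. prodUV r dU V l a b + prodUV r U dV l a b) i + (\<Sum>j\<in>N l. dq l j i))
     + complex_of_real (t\<^sup>2) * Eapp Ec m ar n l l (prodUV r dU dV l) i" for t
    unfolding prod_path Eapp_path by (simp add: sum.distrib sum_distrib_left algebra_simps)
  show ?thesis unfolding e by (rule D3)
qed

lemma pieceD:
  "((\<lambda>t. Re (w * (Eapp Ec m ar n l j (prodUV r (\<lambda>l a k. U l a k + t * dU l a k) (\<lambda>l k b. V l k b + t * dV l k b) j) i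
        - (q l j i + complex_of_real t * dq l j i))))
     has_real_derivative Re (w * (Eapp Ec m ar n l j (\<lambda>a b. prodUV r dU V j a b + prodUV r U dV j a b) i - dq l j i))) (at 0)"
proof -
  have e: "Eapp Ec m ar n l j (prodUV r (\<lambda>l a k. U l a k + t * dU l a k) (\<lambda>l k b. V l k b + t * dV l k b) j) i
        - (q l j i + complex_of_real t * dq l j i) =
     (Eapp Ec m ar n l j (prodUV r U V j) i - q l j i)
     + complex_of_real t * (Eapp Ec m ar n l j (\<lambda>a b. prodUV r dU V j a b + prodUV r U dV j a b) i - dq l j i)
     + complex_of_real (t\<^sup>2) * Eapp Ec m ar n l j (prodUV r dU dV j) i" for t
    unfolding prod_path Eapp_path by (simp add: algebra_simps)
  show ?thesis unfolding e by (rule D4)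
qed

lemma Plag_deriv:
  "((\<lambda>t. Plag m n r nA ar \<Omega> N Ec p f \<mu> \<nu> M
              (\<lambda>l a k. U l a k + t * dU l a k)
              (\<lambda>l k b. V l k b + t * dV l k b)
              (\<lambda>l j a k. S l j a k + t * dS l j a k)
              (\<lambda>l j i. q l j i + complex_of_real t * dq l j i)
              Lam Gam Pm) has_real_derivative
   (\<Sum>l<nA. (1/2) * ((1 / real nA) * (\<Sum>a<m. \<Sum>k<r. 2 * U l a k * dU l a k)
                + (\<Sum>k<r. \<Sum>b\<in>area ar n l. 2 * V l k b * dV l k b))
     + \<mu>/2 * (\<Sum>(a,b)\<in>\<Omega> l. 2 * (prodUV r U V l a b - M a b) * (prodUV r dU V l a b + prodUV r U dV l a b))
     + \<nu>/2 * (\<Sum>i<p l. 2 * Re (cnj (Eapp Ec m ar n l l (prodUV r U V l) i + (\<Sum>j\<in>N l. q l j i) - f l i)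
        * (Eapp Ec m ar n l l (\<lambda>a b. prodUV r dU V l a b + prodUV r U dV l a b) i + (\<Sum>j\<in>N l. dq l j i)))))
   + (\<Sum>l<nA. \<Sum>j\<in>N l.
         (\<Sum>a<m. \<Sum>k<r. Lam l j a k * (dU l a k - dS l j a k))
       + (\<Sum>a<m. \<Sum>k<r. Gam l j a k * (dS l j a k - dU j a k))
       + (\<Sum>i<p l. Re (cnj (Pm l j i) * (Eapp Ec m ar n l j (\<lambda>a b. prodUV r dU V j a b + prodUV r U dV j a b) i - dq l j i))))) (at 0)"
  unfolding Plag_def Pobj_def
  apply (intro DERIV_add DERIV_sum pieceBsum DERIV_cmult D1 pieceC pieceD)
  apply (auto intro!: derivative_eq_intros)
  done

lemma area_sub: "area ar n k \<subseteq> {..<n}"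
  unfolding area_def by auto

lemma finite_area: "finite (area ar n k)"
  by (rule finite_subset[OF area_sub]) simp

lemma area_eq: "area ar n k = {b \<in> {..<n}. ar b = k}"
  unfolding area_def by auto

lemma Eapp_cong:
  assumes "\<forall>a<m. \<forall>b\<in>area ar n k. X a b = Y a b"
  shows "Eapp Ec m ar n l k X i = Eapp Ec m ar n l k Y i"
  unfolding Eapp_def using assms by (intro sum.cong refl) auto

lemma Eapp_delta:
  assumes "a < m" "b < n"
  shows "Eapp Ec m ar n l k (\<lambda>a' b'. if a' = a \<and> b' = b then 1 else 0) i = (if ar b = k then Ec l k i a b else 0)"
proof -
  have "Eapp Ec m ar n l k (\<lambda>a' b'. if a' = a \<and> b' = b then 1 else 0) i =
     (\<Sum>a'<m. \<Sum>b'\<in>area ar n k. if a' = a then (if b' = b then Ec l k i a b else 0) else 0)"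
    unfolding Eapp_def by (intro sum.cong refl) auto
  also have "... = (\<Sum>a'<m. if a' = a then (\<Sum>b'\<in>area ar n k. if b' = b then Ec l k i a b else 0) else 0)"
    by (intro sum.cong refl) auto
  also have "... = (\<Sum>b'\<in>area ar n k. if b' = b then Ec l k i a b else 0)"
    using assms by simp
  also have "... = (if b \<in> area ar n k then Ec l k i a b else 0)"
    using finite_area by simp
  also have "... = (if ar b = k then Ec l k i a b else 0)"
    using assms unfolding area_def by simp
  finally show ?thesis .
qed

lemma Eapp_lin:
  "Eapp Ec m ar n l k X i = (\<Sum>a<m. \<Sum>b<n. complex_of_real (X a b) * Eapp Ec m ar n l k (\<lambda>a' b'. if a' = a \<and> b' = b then 1 else 0) i)"
proof -
  have "(\<Sum>a<m. \<Sum>b<n. complex_of_real (X a b) * Eapp Ec m ar n l k (\<lambda>a' b'. if a' = a \<and> b' = b then 1 else 0) i)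
     = (\<Sum>a<m. \<Sum>b<n. if ar b = k then Ec l k i a b * complex_of_real (X a b) else 0)"
    by (intro sum.cong refl) (auto simp: Eapp_delta)
  also have "... = (\<Sum>a<m. \<Sum>b\<in>area ar n k. Ec l k i a b * complex_of_real (X a b))"
    unfolding area_eq
  proof (rule sum.cong[OF refl])
    fix a show "(\<Sum>b<n. if ar b = k then Ec l k i a b * complex_of_real (X a b) else 0) =
       (\<Sum>b\<in>{b \<in> {..<n}. ar b = k}. Ec l k i a b * complex_of_real (X a b))"
      by (rule sum.inter_filter[symmetric]) simp
  qed
  finally show ?thesis unfolding Eapp_def by simp
qed

lemma zlin:
  "Eapp Ec m ar n l l X i + (\<Sum>j\<in>N l. Eapp Ec m ar n l j X i) =
   (\<Sum>a<m. \<Sum>b<n. complex_of_real (X a b) *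
      (Eapp Ec m ar n l l (\<lambda>a' b'. if a' = a \<and> b' = b then 1 else 0) i
       + (\<Sum>j\<in>N l. Eapp Ec m ar n l j (\<lambda>a' b'. if a' = a \<and> b' = b then 1 else 0) i)))"
proof -
  let ?d = "\<lambda>a b. (\<lambda>a' b'. if a' = a \<and> b' = b then 1 else (0::real))"
  have "(\<Sum>j\<in>N l. Eapp Ec m ar n l j X i) = (\<Sum>j\<in>N l. \<Sum>a<m. \<Sum>b<n. complex_of_real (X a b) * Eapp Ec m ar n l j (?d a b) i)"
    by (intro sum.cong refl) (rule Eapp_lin)
  also have "... = (\<Sum>a<m. \<Sum>j\<in>N l. \<Sum>b<n. complex_of_real (X a b) * Eapp Ec m ar n l j (?d a b) i)"
    by (rule sum.swap)
  also have "... = (\<Sum>a<m. \<Sum>b<n. \<Sum>j\<in>N l. complex_of_real (X a b) * Eapp Ec m ar n l j (?d a b) i)"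
    by (rule sum.cong[OF refl], rule sum.swap)
  finally have e2: "(\<Sum>j\<in>N l. Eapp Ec m ar n l j X i) = (\<Sum>a<m. \<Sum>b<n. complex_of_real (X a b) * (\<Sum>j\<in>N l. Eapp Ec m ar n l j (?d a b) i))"
    by (simp add: sum_distrib_left)
  show ?thesis
    apply (subst Eapp_lin[of Ec m ar n l l X i])
    apply (subst e2)
    by (simp add: sum.distrib[symmetric] distrib_left)
qed

lemma delta2:
  fixes X :: "nat \<Rightarrow> nat \<Rightarrow> real"
  assumes "a0 < m" "b0 < n"
  shows "(\<Sum>a<m. \<Sum>b<n. X a b * (if a0 = a \<and> b0 = b then 1 else 0)) = X a0 b0"
proof -
  have "(\<Sum>b<n. X a b * (if a0 = a \<and> b0 = b then 1 else 0)) = (if a = a0 then X a0 b0 else 0)" for a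
  proof -
    have "(\<Sum>b<n. X a b * (if a0 = a \<and> b0 = b then 1 else 0)) = (\<Sum>b<n. if b = b0 then (if a = a0 then X a b else 0) else 0)"
      by (intro sum.cong) auto
    then show ?thesis using assms by simp
  qed
  then have "(\<Sum>a<m. \<Sum>b<n. X a b * (if a0 = a \<and> b0 = b then 1 else 0)) = (\<Sum>a<m. if a = a0 then X a0 b0 else 0)"
    by simp
  then show ?thesis using assms by simp
qed

lemma Bmap_lin:
  assumes HO: "\<forall>l<nA. \<Omega> l \<subseteq> {..<m} \<times> area ar n l" and c: "c \<in> Bidx nA \<Omega> p"
  shows "Bmap m n ar N Ec \<mu> \<nu> X c = (\<Sum>a<m. \<Sum>b<n. X a b * Bmap m n ar N Ec \<mu> \<nu> (\<lambda>a' b'. if a' = a \<and> b' = b then 1 else 0) c)"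
proof (cases c)
  case (Inl x)
  obtain a0 b0 where x: "x = (a0, b0)" by (cases x)
  obtain l where "l < nA" "(a0, b0) \<in> \<Omega> l" using c Inl x unfolding Bidx_def by auto
  then have ab: "a0 < m" "b0 < n" using HO area_sub by blast+
  show ?thesis unfolding Inl x Bmap_def using delta2[OF ab, of X] by simp
next
  case (Inr y)
  obtain l i t where y: "y = (l, i, t)" by (cases y) auto
  let ?d = "\<lambda>a b. (\<lambda>a' b'. if a' = a \<and> b' = b then 1 else (0::real))"
  let ?z = "\<lambda>a b. Eapp Ec m ar n l l (?d a b) i + (\<Sum>j\<in>N l. Eapp Ec m ar n l j (?d a b) i)"
  have "Bmap m n ar N Ec \<mu> \<nu> X c = sqrt (\<nu>/\<mu>) * (if t then Re (\<Sum>a<m. \<Sum>b<n. complex_of_real (X a b) * ?z a b)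
      else Im (\<Sum>a<m. \<Sum>b<n. complex_of_real (X a b) * ?z a b))"
    unfolding Inr y Bmap_def Let_def prod.case sum.case zlin[of Ec m ar n l X i N] by (rule refl)
  also have "... = (\<Sum>a<m. \<Sum>b<n. X a b * (sqrt (\<nu>/\<mu>) * (if t then Re (?z a b) else Im (?z a b))))"
    by (cases t) (simp_all add: sum_distrib_left mult_ac)
  also have "... = (\<Sum>a<m. \<Sum>b<n. X a b * Bmap m n ar N Ec \<mu> \<nu> (?d a b) c)"
    unfolding Inr y Bmap_def Let_def by simp
  finally show ?thesis .
qed

lemma Bidx_sum:
  assumes HO: "\<forall>l<nA. \<Omega> l \<subseteq> {..<m} \<times> area ar n l"
  shows "(\<Sum>c\<in>Bidx nA \<Omega> p. g c) = (\<Sum>l<nA. \<Sum>x\<in>\<Omega> l. g (Inl x))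
     + (\<Sum>l<nA. \<Sum>i<p l. g (Inr (l, i, True)) + g (Inr (l, i, False)))"
proof -
  define A where "A = (\<Union>l<nA. \<Omega> l)"
  define T where "T = {(l, i, t::bool). l < nA \<and> i < p l}"
  have finO: "finite (\<Omega> l)" if "l < nA" for l
    using HO that finite_area by (meson finite_SigmaI finite_lessThan finite_subset)
  have finA: "finite A" unfolding A_def using finO by auto
  have TS: "T = Sigma {..<nA} (\<lambda>l. {..<p l} \<times> UNIV)" unfolding T_def by auto
  have finT: "finite T" unfolding TS by (intro finite_SigmaI) (auto simp: UNIV_bool)
  have B: "Bidx nA \<Omega> p = Inl ` A \<union> Inr ` T" unfolding Bidx_def A_def T_def by simp
  have "(\<Sum>c\<in>Bidx nA \<Omega> p. g c) = (\<Sum>c\<in>Inl ` A. g c) + (\<Sum>c\<in>Inr ` T. g c)"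
    unfolding B by (rule sum.union_disjoint) (use finA finT in auto)
  also have "(\<Sum>c\<in>Inl ` A. g c) = (\<Sum>x\<in>A. g (Inl x))"
    by (subst sum.reindex) auto
  also have "... = (\<Sum>l<nA. \<Sum>x\<in>\<Omega> l. g (Inl x))"
    unfolding A_def
  proof (rule sum.UNION_disjoint)
    show "\<forall>i\<in>{..<nA}. \<forall>j\<in>{..<nA}. i \<noteq> j \<longrightarrow> \<Omega> i \<inter> \<Omega> j = {}"
    proof (intro ballI impI)
      fix i j assume "i \<in> {..<nA}" "j \<in> {..<nA}" "i \<noteq> j"
      then have "\<Omega> i \<subseteq> UNIV \<times> area ar n i" "\<Omega> j \<subseteq> UNIV \<times> area ar n j" using HO by auto
      then show "\<Omega> i \<inter> \<Omega> j = {}" using \<open>i \<noteq> j\<close> unfolding area_def by auto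
    qed
  qed (use finO in auto)
  also have "(\<Sum>c\<in>Inr ` T. g c) = (\<Sum>x\<in>T. g (Inr x))"
    by (subst sum.reindex) auto
  also have "... = (\<Sum>l<nA. \<Sum>it\<in>{..<p l} \<times> UNIV. g (Inr (l, it)))"
    unfolding TS by (subst sum.Sigma) (auto simp: UNIV_bool)
  also have "... = (\<Sum>l<nA. \<Sum>i<p l. g (Inr (l, i, True)) + g (Inr (l, i, False)))"
  proof (rule sum.cong[OF refl])
    fix l
    have "(\<Sum>it\<in>{..<p l} \<times> UNIV. g (Inr (l, it))) = (\<Sum>i<p l. \<Sum>t\<in>UNIV. g (Inr (l, i, t)))"
      by (subst sum.Sigma) (auto simp: UNIV_bool)
    also have "... = (\<Sum>i<p l. g (Inr (l, i, True)) + g (Inr (l, i, False)))"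
      by (simp add: UNIV_bool add.commute)
    finally show "(\<Sum>it\<in>{..<p l} \<times> UNIV. g (Inr (l, it))) = (\<Sum>i<p l. g (Inr (l, i, True)) + g (Inr (l, i, False)))" .
  qed
  finally show ?thesis .
qed

lemma GradId:
  fixes P Yl :: "nat \<Rightarrow> nat \<Rightarrow> nat \<Rightarrow> real" and Xb :: "nat \<Rightarrow> nat \<Rightarrow> real"
  assumes HO: "\<forall>l<nA. \<Omega> l \<subseteq> {..<m} \<times> area ar n l"
    and HN: "\<forall>l<nA. N l \<subseteq> {..<nA}"
    and HP: "\<forall>l<nA. \<forall>a<m. \<forall>b\<in>area ar n l. P l a b = Xb a b"
    and Hq: "\<forall>l<nA. \<forall>j\<in>N l. \<forall>i<p l. q l j i = Eapp Ec m ar n l j (P j) i"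
    and Hdq: "\<forall>l<nA. \<forall>j\<in>N l. \<forall>i<p l. dq l j i = Eapp Ec m ar n l j (Yl j) i"
    and mu: "\<mu> > 0" and nu: "\<nu> > 0"
  shows "(\<Sum>l<nA. \<mu>/2 * (\<Sum>(a,b)\<in>\<Omega> l. 2 * (P l a b - M a b) * Yl l a b)
     + \<nu>/2 * (\<Sum>i<p l. 2 * Re (cnj (Eapp Ec m ar n l l (P l) i + (\<Sum>j\<in>N l. q l j i) - f l i)
        * (Eapp Ec m ar n l l (Yl l) i + (\<Sum>j\<in>N l. dq l j i)))))
   = (\<Sum>a<m. \<Sum>b<n. \<mu> * Badj m n nA ar \<Omega> N Ec p \<mu> \<nu> (\<lambda>c. Bmap m n ar N Ec \<mu> \<nu> Xb c - dvec \<mu> \<nu> M f c) a b * Yl (ar b) a b)"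
proof -
  define \<rho> where "\<rho> c = Bmap m n ar N Ec \<mu> \<nu> Xb c - dvec \<mu> \<nu> M f c" for c
  define Y where "Y a b = Yl (ar b) a b" for a b
  let ?B = "Bidx nA \<Omega> p"
  let ?d = "\<lambda>a b. (\<lambda>a' b'. if a' = a \<and> b' = b then 1 else (0::real))"
  let ?Bm = "Bmap m n ar N Ec \<mu> \<nu>"
  have "(\<Sum>a<m. \<Sum>b<n. \<mu> * Badj m n nA ar \<Omega> N Ec p \<mu> \<nu> \<rho> a b * Y a b)
      = (\<Sum>a<m. \<Sum>b<n. \<Sum>c\<in>?B. \<mu> * (\<rho> c * (Y a b * ?Bm (?d a b) c)))"
    unfolding Badj_def by (intro sum.cong refl) (auto simp: sum_distrib_left sum_distrib_right mult_ac)
  also have "... = (\<Sum>a<m. \<Sum>c\<in>?B. \<Sum>b<n. \<mu> * (\<rho> c * (Y a b * ?Bm (?d a b) c)))"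
    by (rule sum.cong[OF refl], rule sum.swap)
  also have "... = (\<Sum>c\<in>?B. \<Sum>a<m. \<Sum>b<n. \<mu> * (\<rho> c * (Y a b * ?Bm (?d a b) c)))"
    by (rule sum.swap)
  also have "... = (\<Sum>c\<in>?B. \<mu> * (\<rho> c * ?Bm Y c))"
  proof (rule sum.cong[OF refl])
    fix c assume "c \<in> ?B"
    then have "?Bm Y c = (\<Sum>a<m. \<Sum>b<n. Y a b * ?Bm (?d a b) c)" using Bmap_lin[OF HO] by blast
    then show "(\<Sum>a<m. \<Sum>b<n. \<mu> * (\<rho> c * (Y a b * ?Bm (?d a b) c))) = \<mu> * (\<rho> c * ?Bm Y c)"
      by (simp add: sum_distrib_left)
  qed
  also have "... = (\<Sum>l<nA. \<Sum>x\<in>\<Omega> l. \<mu> * (\<rho> (Inl x) * ?Bm Y (Inl x)))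
     + (\<Sum>l<nA. \<Sum>i<p l. \<mu> * (\<rho> (Inr (l, i, True)) * ?Bm Y (Inr (l, i, True))) + \<mu> * (\<rho> (Inr (l, i, False)) * ?Bm Y (Inr (l, i, False))))"
    by (rule Bidx_sum[OF HO])
  also have "... = (\<Sum>l<nA. \<mu>/2 * (\<Sum>(a,b)\<in>\<Omega> l. 2 * (P l a b - M a b) * Yl l a b)
     + \<nu>/2 * (\<Sum>i<p l. 2 * Re (cnj (Eapp Ec m ar n l l (P l) i + (\<Sum>j\<in>N l. q l j i) - f l i)
        * (Eapp Ec m ar n l l (Yl l) i + (\<Sum>j\<in>N l. dq l j i)))))"
  proof -
    have hIn: "(\<Sum>x\<in>\<Omega> l. \<mu> * (\<rho> (Inl x) * ?Bm Y (Inl x))) = \<mu>/2 * (\<Sum>(a,b)\<in>\<Omega> l. 2 * (P l a b - M a b) * Yl l a b)"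
      if l: "l < nA" for l
    proof -
      have "(\<Sum>x\<in>\<Omega> l. \<mu> * (\<rho> (Inl x) * ?Bm Y (Inl x))) = (\<Sum>x\<in>\<Omega> l. \<mu>/2 * (case x of (a,b) \<Rightarrow> 2 * (P l a b - M a b) * Yl l a b))"
      proof (rule sum.cong[OF refl])
        fix x assume x: "x \<in> \<Omega> l"
        obtain a b where ab: "x = (a, b)" by (cases x)
        have a: "a < m" and b: "b \<in> area ar n l" using HO l x ab by auto
        then have arb: "ar b = l" unfolding area_def by simp
        have "P l a b = Xb a b" using HP l a b by blast
        then show "\<mu> * (\<rho> (Inl x) * ?Bm Y (Inl x)) = \<mu>/2 * (case x of (a,b) \<Rightarrow> 2 * (P l a b - M a b) * Yl l a b)"
          unfolding ab \<rho>_def Bmap_def dvec_def Y_def using arb by simp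
      qed
      then show ?thesis by (simp add: sum_distrib_left case_prod_beta)
    qed
    have hIr: "(\<Sum>i<p l. \<mu> * (\<rho> (Inr (l, i, True)) * ?Bm Y (Inr (l, i, True))) + \<mu> * (\<rho> (Inr (l, i, False)) * ?Bm Y (Inr (l, i, False))))
      = \<nu> / 2 * (\<Sum>i<p l. 2 * Re (cnj (Eapp Ec m ar n l l (P l) i + (\<Sum>j\<in>N l. q l j i) - f l i) * (Eapp Ec m ar n l l (Yl l) i + (\<Sum>j\<in>N l. dq l j i))))"
      if l: "l < nA" for l
    proof -
      have per: "\<mu> * (\<rho> (Inr (l, i, True)) * ?Bm Y (Inr (l, i, True))) + \<mu> * (\<rho> (Inr (l, i, False)) * ?Bm Y (Inr (l, i, False)))
        = \<nu> / 2 * (2 * Re (cnj (Eapp Ec m ar n l l (P l) i + (\<Sum>j\<in>N l. q l j i) - f l i) * (Eapp Ec m ar n l l (Yl l) i + (\<Sum>j\<in>N l. dq l j i))))"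
        if i: "i < p l" for i
      proof -
        define zX where "zX = Eapp Ec m ar n l l Xb i + (\<Sum>j\<in>N l. Eapp Ec m ar n l j Xb i)"
        define zY where "zY = Eapp Ec m ar n l l Y i + (\<Sum>j\<in>N l. Eapp Ec m ar n l j Y i)"
        have e0: "Eapp Ec m ar n l l (P l) i + (\<Sum>j\<in>N l. q l j i) - f l i = zX - f l i"
        proof -
          have "Eapp Ec m ar n l l (P l) i = Eapp Ec m ar n l l Xb i"
            using HP l by (intro Eapp_cong) auto
          moreover have "(\<Sum>j\<in>N l. q l j i) = (\<Sum>j\<in>N l. Eapp Ec m ar n l j Xb i)"
          proof (rule sum.cong[OF refl])
            fix j assume j: "j \<in> N l"
            then have "j < nA" using HN l by auto
            then have "Eapp Ec m ar n l j (P j) i = Eapp Ec m ar n l j Xb i"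
              using HP by (intro Eapp_cong) auto
            then show "q l j i = Eapp Ec m ar n l j Xb i" using Hq l j i by auto
          qed
          ultimately show ?thesis unfolding zX_def by simp
        qed
        have e1: "Eapp Ec m ar n l l (Yl l) i + (\<Sum>j\<in>N l. dq l j i) = zY"
        proof -
          have "Eapp Ec m ar n l l (Yl l) i = Eapp Ec m ar n l l Y i"
            by (intro Eapp_cong) (auto simp: Y_def area_def)
          moreover have "(\<Sum>j\<in>N l. dq l j i) = (\<Sum>j\<in>N l. Eapp Ec m ar n l j Y i)"
          proof (rule sum.cong[OF refl])
            fix j assume j: "j \<in> N l"
            have "Eapp Ec m ar n l j (Yl j) i = Eapp Ec m ar n l j Y i"
              by (intro Eapp_cong) (auto simp: Y_def area_def)
            then show "dq l j i = Eapp Ec m ar n l j Y i" using Hdq l j i by auto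
          qed
          ultimately show ?thesis unfolding zY_def by simp
        qed
        define s where "s = sqrt (\<nu>/\<mu>)"
        have s2: "s * s = \<nu>/\<mu>" using mu nu unfolding s_def by simp
        have bX: "?Bm Xb (Inr (l, i, t)) = s * (if t then Re zX else Im zX)" for t
          unfolding Bmap_def Let_def zX_def s_def by simp
        have bY: "?Bm Y (Inr (l, i, t)) = s * (if t then Re zY else Im zY)" for t
          unfolding Bmap_def Let_def zY_def s_def by simp
        have dv: "dvec \<mu> \<nu> M f (Inr (l, i, t)) = s * (if t then Re (f l i) else Im (f l i))" for t
          unfolding dvec_def s_def by simp
        have "\<mu> * (\<rho> (Inr (l, i, True)) * ?Bm Y (Inr (l, i, True))) + \<mu> * (\<rho> (Inr (l, i, False)) * ?Bm Y (Inr (l, i, False)))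
          = \<mu> * (s * s) * (Re (zX - f l i) * Re zY + Im (zX - f l i) * Im zY)"
          unfolding \<rho>_def bX bY dv by (simp add: algebra_simps)
        also have "... = \<nu> * Re (cnj (zX - f l i) * zY)" using s2 mu by (simp add: algebra_simps)
        finally show ?thesis unfolding e0 e1 by simp
      qed
      have "(\<Sum>i<p l. \<mu> * (\<rho> (Inr (l, i, True)) * ?Bm Y (Inr (l, i, True))) + \<mu> * (\<rho> (Inr (l, i, False)) * ?Bm Y (Inr (l, i, False))))
        = (\<Sum>i<p l. \<nu> / 2 * (2 * Re (cnj (Eapp Ec m ar n l l (P l) i + (\<Sum>j\<in>N l. q l j i) - f l i) * (Eapp Ec m ar n l l (Yl l) i + (\<Sum>j\<in>N l. dq l j i)))))"
        using per by (intro sum.cong refl) auto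
      then show ?thesis by (simp only: sum_distrib_left)
    qed
    show ?thesis
      apply (subst sum.distrib[symmetric])
      apply (rule sum.cong[OF refl])
      apply (simp only: hIn hIr lessThan_iff)
      done
  qed
  finally show ?thesis unfolding \<rho>_def Y_def by simp
qed

lemma AdjId:
  assumes HO: "\<forall>l<nA. \<Omega> l \<subseteq> {..<m} \<times> area ar n l"
  shows "(\<Sum>a<m. \<Sum>b<n. \<mu> * Badj m n nA ar \<Omega> N Ec p \<mu> \<nu> \<rho> a b * Y a b)
       = \<mu> * (\<Sum>c\<in>Bidx nA \<Omega> p. \<rho> c * Bmap m n ar N Ec \<mu> \<nu> Y c)"
proof -
  let ?B = "Bidx nA \<Omega> p"
  let ?d = "\<lambda>a b. (\<lambda>a' b'. if a' = a \<and> b' = b then 1 else (0::real))"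
  let ?Bm = "Bmap m n ar N Ec \<mu> \<nu>"
  have "(\<Sum>a<m. \<Sum>b<n. \<mu> * Badj m n nA ar \<Omega> N Ec p \<mu> \<nu> \<rho> a b * Y a b)
      = (\<Sum>a<m. \<Sum>b<n. \<Sum>c\<in>?B. \<mu> * (\<rho> c * (Y a b * ?Bm (?d a b) c)))"
    unfolding Badj_def by (intro sum.cong refl) (auto simp: sum_distrib_left sum_distrib_right mult_ac)
  also have "... = (\<Sum>a<m. \<Sum>c\<in>?B. \<Sum>b<n. \<mu> * (\<rho> c * (Y a b * ?Bm (?d a b) c)))"
    by (rule sum.cong[OF refl], rule sum.swap)
  also have "... = (\<Sum>c\<in>?B. \<Sum>a<m. \<Sum>b<n. \<mu> * (\<rho> c * (Y a b * ?Bm (?d a b) c)))"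
    by (rule sum.swap)
  also have "... = (\<Sum>c\<in>?B. \<mu> * (\<rho> c * ?Bm Y c))"
  proof (rule sum.cong[OF refl])
    fix c assume "c \<in> ?B"
    then have "?Bm Y c = (\<Sum>a<m. \<Sum>b<n. Y a b * ?Bm (?d a b) c)" using Bmap_lin[OF HO] by blast
    then show "(\<Sum>a<m. \<Sum>b<n. \<mu> * (\<rho> c * (Y a b * ?Bm (?d a b) c))) = \<mu> * (\<rho> c * ?Bm Y c)"
      by (simp add: sum_distrib_left)
  qed
  finally show ?thesis by (simp add: sum_distrib_left)
qed

lemma Bmap_diff:
  assumes HO: "\<forall>l<nA. \<Omega> l \<subseteq> {..<m} \<times> area ar n l" and c: "c \<in> Bidx nA \<Omega> p"
  shows "Bmap m n ar N Ec \<mu> \<nu> (\<lambda>a b. X a b - Z a b) c = Bmap m n ar N Ec \<mu> \<nu> X c - Bmap m n ar N Ec \<mu> \<nu> Z c"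
  using Bmap_lin[where X = X, OF HO c] Bmap_lin[where X = Z, OF HO c] Bmap_lin[where X = "\<lambda>a b. X a b - Z a b", OF HO c]
  by (simp add: left_diff_distrib sum_subtractf)

lemma Qineq:
  assumes HO: "\<forall>l<nA. \<Omega> l \<subseteq> {..<m} \<times> area ar n l" and mu: "\<mu> > 0"
  shows "(\<Sum>a<m. \<Sum>b<n. \<mu> * Badj m n nA ar \<Omega> N Ec p \<mu> \<nu> (\<lambda>c. Bmap m n ar N Ec \<mu> \<nu> Xb c - d c) a b * (X a b - Xb a b))
     \<le> \<mu>/2 * (\<Sum>c\<in>Bidx nA \<Omega> p. (Bmap m n ar N Ec \<mu> \<nu> X c - d c)\<^sup>2)
       - \<mu>/2 * (\<Sum>c\<in>Bidx nA \<Omega> p. (Bmap m n ar N Ec \<mu> \<nu> Xb c - d c)\<^sup>2)"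
proof -
  let ?Bm = "Bmap m n ar N Ec \<mu> \<nu>"
  have "(\<Sum>a<m. \<Sum>b<n. \<mu> * Badj m n nA ar \<Omega> N Ec p \<mu> \<nu> (\<lambda>c. ?Bm Xb c - d c) a b * (X a b - Xb a b))
     = \<mu> * (\<Sum>c\<in>Bidx nA \<Omega> p. (?Bm Xb c - d c) * ?Bm (\<lambda>a b. X a b - Xb a b) c)"
    by (rule AdjId[OF HO])
  also have "... = \<mu> * (\<Sum>c\<in>Bidx nA \<Omega> p. (?Bm Xb c - d c) * (?Bm X c - ?Bm Xb c))"
    using Bmap_diff[OF HO] by simp
  also have "... \<le> \<mu> * (\<Sum>c\<in>Bidx nA \<Omega> p. ((?Bm X c - d c)\<^sup>2 - (?Bm Xb c - d c)\<^sup>2) / 2)"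
  proof (intro mult_left_mono sum_mono)
    fix c
    have "0 \<le> (?Bm X c - ?Bm Xb c)\<^sup>2" by simp
    then show "(?Bm Xb c - d c) * (?Bm X c - ?Bm Xb c) \<le> ((?Bm X c - d c)\<^sup>2 - (?Bm Xb c - d c)\<^sup>2) / 2"
      by (simp add: power2_eq_square algebra_simps)
  qed (use mu in simp)
  also have "... = \<mu> * (((\<Sum>c\<in>Bidx nA \<Omega> p. (?Bm X c - d c)\<^sup>2) - (\<Sum>c\<in>Bidx nA \<Omega> p. (?Bm Xb c - d c)\<^sup>2)) / 2)"
    by (simp only: sum_divide_distrib[symmetric] sum_subtractf)
  also have "... = \<mu>/2 * (\<Sum>c\<in>Bidx nA \<Omega> p. (?Bm X c - d c)\<^sup>2) - \<mu>/2 * (\<Sum>c\<in>Bidx nA \<Omega> p. (?Bm Xb c - d c)\<^sup>2)"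
    by (simp add: field_simps)
  finally show ?thesis .
qed


lemma stationary_grad:
  fixes U V dU dV :: "nat \<Rightarrow> nat \<Rightarrow> nat \<Rightarrow> real" and Xb :: "nat \<Rightarrow> nat \<Rightarrow> real"
  assumes HO: "\<forall>l<nA. \<Omega> l \<subseteq> {..<m} \<times> area ar n l"
    and HN: "\<forall>l<nA. N l \<subseteq> {..<nA}"
    and HP: "\<forall>l<nA. \<forall>a<m. \<forall>b\<in>area ar n l. prodUV r U V l a b = Xb a b"
    and Hq: "\<forall>l<nA. \<forall>j\<in>N l. \<forall>i<p l. q l j i = Eapp Ec m ar n l j (prodUV r U V j) i"
    and mu: "\<mu> > 0" and nu: "\<nu> > 0"
    and der: "((\<lambda>t. Plag m n r nA ar \<Omega> N Ec p f \<mu> \<nu> M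
              (\<lambda>l a k. U l a k + t * dU l a k)
              (\<lambda>l k b. V l k b + t * dV l k b)
              (\<lambda>l j a k. S l j a k + t * dS l j a k)
              (\<lambda>l j i. q l j i + complex_of_real t *
                  Eapp Ec m ar n l j (\<lambda>a b. prodUV r dU V j a b + prodUV r U dV j a b) i)
              Lam Gam Pm) has_real_derivative 0) (at 0)"
  shows "(\<Sum>l<nA. (1/2) * ((1 / real nA) * (\<Sum>a<m. \<Sum>k<r. 2 * U l a k * dU l a k)
                + (\<Sum>k<r. \<Sum>b\<in>area ar n l. 2 * V l k b * dV l k b)))
     + (\<Sum>a<m. \<Sum>b<n. \<mu> * Badj m n nA ar \<Omega> N Ec p \<mu> \<nu> (\<lambda>c. Bmap m n ar N Ec \<mu> \<nu> Xb c - dvec \<mu> \<nu> M f c) a b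
           * (prodUV r dU V (ar b) a b + prodUV r U dV (ar b) a b))
     + (\<Sum>l<nA. \<Sum>j\<in>N l.
         (\<Sum>a<m. \<Sum>k<r. Lam l j a k * (dU l a k - dS l j a k))
       + (\<Sum>a<m. \<Sum>k<r. Gam l j a k * (dS l j a k - dU j a k))) = 0"
proof -
  let ?dq = "\<lambda>l j i. Eapp Ec m ar n l j (\<lambda>a b. prodUV r dU V j a b + prodUV r U dV j a b) i"
  let ?X1 = "\<lambda>l. (1/2) * ((1 / real nA) * (\<Sum>a<m. \<Sum>k<r. 2 * U l a k * dU l a k)
                + (\<Sum>k<r. \<Sum>b\<in>area ar n l. 2 * V l k b * dV l k b))"
  let ?X23 = "\<lambda>l. \<mu>/2 * (\<Sum>(a,b)\<in>\<Omega> l. 2 * (prodUV r U V l a b - M a b) * (prodUV r dU V l a b + prodUV r U dV l a b))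
     + \<nu>/2 * (\<Sum>i<p l. 2 * Re (cnj (Eapp Ec m ar n l l (prodUV r U V l) i + (\<Sum>j\<in>N l. q l j i) - f l i)
        * (Eapp Ec m ar n l l (\<lambda>a b. prodUV r dU V l a b + prodUV r U dV l a b) i + (\<Sum>j\<in>N l. ?dq l j i))))"
  let ?C = "\<lambda>l j. (\<Sum>a<m. \<Sum>k<r. Lam l j a k * (dU l a k - dS l j a k))
       + (\<Sum>a<m. \<Sum>k<r. Gam l j a k * (dS l j a k - dU j a k))"
  have D: "(\<Sum>l<nA. ?X1 l + ?X23 l)
   + (\<Sum>l<nA. \<Sum>j\<in>N l. ?C l j
       + (\<Sum>i<p l. Re (cnj (Pm l j i) * (Eapp Ec m ar n l j (\<lambda>a b. prodUV r dU V j a b + prodUV r U dV j a b) i - ?dq l j i)))) = 0"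
    using DERIV_unique[OF Plag_deriv der] by (simp only: add.assoc)
  have C: "(\<Sum>l<nA. \<Sum>j\<in>N l. ?C l j
       + (\<Sum>i<p l. Re (cnj (Pm l j i) * (Eapp Ec m ar n l j (\<lambda>a b. prodUV r dU V j a b + prodUV r U dV j a b) i - ?dq l j i))))
      = (\<Sum>l<nA. \<Sum>j\<in>N l. ?C l j)" by simp
  have G: "(\<Sum>l<nA. ?X23 l) = (\<Sum>a<m. \<Sum>b<n. \<mu> * Badj m n nA ar \<Omega> N Ec p \<mu> \<nu> (\<lambda>c. Bmap m n ar N Ec \<mu> \<nu> Xb c - dvec \<mu> \<nu> M f c) a b
           * (prodUV r dU V (ar b) a b + prodUV r U dV (ar b) a b))"
    by (rule GradId[where Yl = "\<lambda>l a b. prodUV r dU V l a b + prodUV r U dV l a b", OF HO HN HP Hq _ mu nu]) simp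
  have S: "(\<Sum>l<nA. ?X1 l + ?X23 l) = (\<Sum>l<nA. ?X1 l) + (\<Sum>l<nA. ?X23 l)" by (rule sum.distrib)
  show ?thesis using D unfolding C S G .
qed


lemma partition_sum:
  assumes "\<forall>b<n. ar b < nA"
  shows "(\<Sum>b<n. g b) = (\<Sum>l<nA. \<Sum>b\<in>area ar n l. g b)"
proof -
  have "{..<n} = (\<Union>l<nA. area ar n l)" using assms unfolding area_def by auto
  then have "(\<Sum>b<n. g b) = (\<Sum>b\<in>(\<Union>l<nA. area ar n l). g b)" by simp
  also have "... = (\<Sum>l<nA. \<Sum>b\<in>area ar n l. g b)"
    by (rule sum.UNION_disjoint) (auto simp: finite_area area_def)
  finally show ?thesis .
qed

lemma sq_sum_zero:
  fixes h :: "'a \<Rightarrow> real"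
  assumes "finite A" "(\<Sum>x\<in>A. h x * h x) = 0" "x \<in> A"
  shows "h x = 0"
proof -
  have "\<forall>x\<in>A. h x * h x = 0" using assms(1,2) by (subst sum_nonneg_eq_0_iff[symmetric]) auto
  then show ?thesis using assms(3) by simp
qed

lemma sq_sum_zero2:
  fixes h :: "'a \<Rightarrow> 'b \<Rightarrow> real"
  assumes "finite A" "\<And>x. finite (B x)" "(\<Sum>x\<in>A. \<Sum>y\<in>B x. h x y * h x y) = 0" "x \<in> A" "y \<in> B x"
  shows "h x y = 0"
proof -
  have "\<forall>x\<in>A. (\<Sum>y\<in>B x. h x y * h x y) = 0"
    using assms(1,3) by (subst sum_nonneg_eq_0_iff[symmetric]) (auto intro: sum_nonneg)
  then show ?thesis using sq_sum_zero[OF assms(2)] assms(4,5) by blast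
qed

lemma sq_sum_zero3:
  fixes h :: "'a \<Rightarrow> 'b \<Rightarrow> 'c \<Rightarrow> real"
  assumes "finite A" "\<And>x. finite (B x)" "\<And>x y. finite (C x y)"
    "(\<Sum>x\<in>A. \<Sum>y\<in>B x. \<Sum>z\<in>C x y. h x y z * h x y z) = 0" "x \<in> A" "y \<in> B x" "z \<in> C x y"
  shows "h x y z = 0"
proof -
  have "\<forall>x\<in>A. (\<Sum>y\<in>B x. \<Sum>z\<in>C x y. h x y z * h x y z) = 0"
    using assms(1,4) by (subst sum_nonneg_eq_0_iff[symmetric]) (auto intro!: sum_nonneg)
  then have "(\<Sum>y\<in>B x. \<Sum>z\<in>C x y. h x y z * h x y z) = 0" using assms(5) by blast
  then show ?thesis using sq_sum_zero2[of "B x" "C x" "h x" y z] assms(2,3,6,7) by blast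
qed

theorem theorem1:
  fixes m n r nA :: nat and \<mu> \<nu> :: real and M :: "nat \<Rightarrow> nat \<Rightarrow> real"
    and ar :: "nat \<Rightarrow> nat" and \<Omega> :: "nat \<Rightarrow> (nat \<times> nat) set" and N :: "nat \<Rightarrow> nat set"
    and p :: "nat \<Rightarrow> nat" and Ec :: "nat \<Rightarrow> nat \<Rightarrow> nat \<Rightarrow> nat \<Rightarrow> nat \<Rightarrow> complex"
    and f :: "nat \<Rightarrow> nat \<Rightarrow> complex"
    and U :: "nat \<Rightarrow> nat \<Rightarrow> nat \<Rightarrow> real" and V :: "nat \<Rightarrow> nat \<Rightarrow> nat \<Rightarrow> real"
    and S :: "nat \<Rightarrow> nat \<Rightarrow> nat \<Rightarrow> nat \<Rightarrow> real" and q :: "nat \<Rightarrow> nat \<Rightarrow> nat \<Rightarrow> complex"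
  assumes "m \<ge> 1" and "n \<ge> 1" and "r \<ge> 1" and "nA \<ge> 1" and "\<mu> > 0" and "\<nu> > 0"
    and "\<forall>b<n. ar b < nA"
    and "\<forall>l<nA. area ar n l \<noteq> {}"
    and "\<forall>l<nA. \<Omega> l \<subseteq> {..<m} \<times> area ar n l"
    and "\<forall>l<nA. N l \<subseteq> {..<nA} - {l}"
    and "\<forall>l<nA. \<forall>j\<in>N l. l \<in> N j"
    and "area_graph_connected nA N"
    and "Pstationary m n r nA ar \<Omega> N Ec p f \<mu> \<nu> M U V S q"
  shows "(\<forall>l<nA. \<forall>a<m. \<forall>k<r. U l a k = U 0 a k) \<and>
    (let Xb = (\<lambda>a b. \<Sum>k<r. U 0 a k * V (ar b) k b) in
      spectral_norm m n
        (\<lambda>a b. \<mu> * Badj m n nA ar \<Omega> N Ec p \<mu> \<nu>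
                   (\<lambda>c. Bmap m n ar N Ec \<mu> \<nu> Xb c - dvec \<mu> \<nu> M f c) a b) \<le> 1
      \<longrightarrow> (\<forall>X. NNobj m n nA ar \<Omega> N Ec p f \<mu> \<nu> M Xb \<le> NNobj m n nA ar \<Omega> N Ec p f \<mu> \<nu> M X))"
proof -
  have mu: "\<mu> > 0" and nu: "\<nu> > 0" using assms(5,6) .
  have arb: "\<forall>b<n. ar b < nA" using assms(7) .
  have HO: "\<forall>l<nA. \<Omega> l \<subseteq> {..<m} \<times> area ar n l" using assms(9) .
  have HN: "\<forall>l<nA. N l \<subseteq> {..<nA}" using assms(10) by blast
  obtain Lam Gam Pm where der: "\<forall>dU dV dS dq.
       ((\<lambda>t. Plag m n r nA ar \<Omega> N Ec p f \<mu> \<nu> M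
              (\<lambda>l a k. U l a k + t * dU l a k)
              (\<lambda>l k b. V l k b + t * dV l k b)
              (\<lambda>l j a k. S l j a k + t * dS l j a k)
              (\<lambda>l j i. q l j i + complex_of_real t * dq l j i)
              Lam Gam Pm) has_real_derivative 0) (at 0)"
    using assms(13) unfolding Pstationary_def by blast
  have feas: "Pfeasible m n r nA ar N Ec p U V S q" using assms(13) unfolding Pstationary_def by blast
  have feas': "\<forall>l<nA. \<forall>j\<in>N l.
       (\<forall>a<m. \<forall>k<r. U l a k = S l j a k \<and> S l j a k = U j a k) \<and>
       (\<forall>i<p l. Eapp Ec m ar n l j (prodUV r U V j) i = q l j i)"
    using feas unfolding Pfeasible_def .
  have F1: "\<forall>l<nA. \<forall>j\<in>N l. \<forall>a<m. \<forall>k<r. U l a k = U j a k"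
  proof (intro allI impI ballI)
    fix l j a k assume "l < nA" "j \<in> N l" "a < m" "k < r"
    then show "U l a k = U j a k" using feas' by auto
  qed
  have Hq: "\<forall>l<nA. \<forall>j\<in>N l. \<forall>i<p l. q l j i = Eapp Ec m ar n l j (prodUV r U V j) i"
  proof (intro allI impI ballI)
    fix l j i assume "l < nA" "j \<in> N l" "i < p l"
    then show "q l j i = Eapp Ec m ar n l j (prodUV r U V j) i" using feas' by auto
  qed
  have cons: "\<forall>l<nA. \<forall>a<m. \<forall>k<r. U l a k = U 0 a k"
  proof (rule allI, rule impI)
    fix l assume l: "l < nA"
    have "(0, l) \<in> {(x, y). x < nA \<and> y \<in> N x}\<^sup>*"
      using assms(12) l assms(4) unfolding area_graph_connected_def by auto
    then show "\<forall>a<m. \<forall>k<r. U l a k = U 0 a k"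
    proof (induction rule: rtrancl_induct)
      case base
      then show ?case by simp
    next
      case (step y z)
      then have yz: "y < nA" "z \<in> N y" by auto
      show ?case
      proof (intro allI impI)
        fix a k assume "a < m" "k < r"
        then have "U y a k = U z a k" using F1 yz by blast
        then have "U z a k = U y a k" by simp
        then show "U z a k = U 0 a k" using step.IH \<open>a < m\<close> \<open>k < r\<close> by simp
      qed
    qed
  qed
  define Xb where "Xb = (\<lambda>a b. \<Sum>k<r. U 0 a k * V (ar b) k b)"
  define G where "G = (\<lambda>a b. \<mu> * Badj m n nA ar \<Omega> N Ec p \<mu> \<nu> (\<lambda>c. Bmap m n ar N Ec \<mu> \<nu> Xb c - dvec \<mu> \<nu> M f c) a b)"
  have HP: "\<forall>l<nA. \<forall>a<m. \<forall>b\<in>area ar n l. prodUV r U V l a b = Xb a b"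
  proof (intro allI impI ballI)
    fix l a b assume "l < nA" "a < m" "b \<in> area ar n l"
    then have "ar b = l" "\<forall>k<r. U l a k = U 0 a k" using cons unfolding area_def by blast+
    then show "prodUV r U V l a b = Xb a b" unfolding prodUV_def Xb_def by simp
  qed
  define H where "H k b = (\<Sum>a<m. U 0 a k * G a b)" for k b
  define Dv where "Dv l k b = V l k b + H k b" for l k b
  have gA: "(\<Sum>l<nA. (1/2) * ((1 / real nA) * (\<Sum>a<m. \<Sum>k<r. 2 * U l a k * 0)
                + (\<Sum>k<r. \<Sum>b\<in>area ar n l. 2 * V l k b * Dv l k b)))
     + (\<Sum>a<m. \<Sum>b<n. G a b * (prodUV r (\<lambda>_ _ _. 0) V (ar b) a b + prodUV r U Dv (ar b) a b))
     + (\<Sum>l<nA. \<Sum>j\<in>N l. (\<Sum>a<m. \<Sum>k<r. Lam l j a k * (0 - 0)) + (\<Sum>a<m. \<Sum>k<r. Gam l j a k * (0 - 0))) = 0"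
    unfolding G_def
    by (rule stationary_grad[where dU = "\<lambda>_ _ _. 0" and dV = Dv and dS = "\<lambda>_ _ _ _. 0", OF HO HN HP Hq mu nu der[rule_format]])
  have A1: "(\<Sum>l<nA. \<Sum>k<r. \<Sum>b\<in>area ar n l. V l k b * Dv l k b) + (\<Sum>a<m. \<Sum>b<n. G a b * (\<Sum>k<r. U 0 a k * Dv (ar b) k b)) = 0"
  proof -
    have t1: "(\<Sum>l<nA. (1/2) * ((1 / real nA) * (\<Sum>a<m. \<Sum>k<r. 2 * U l a k * 0)
                + (\<Sum>k<r. \<Sum>b\<in>area ar n l. 2 * V l k b * Dv l k b))) = (\<Sum>l<nA. \<Sum>k<r. \<Sum>b\<in>area ar n l. V l k b * Dv l k b)"
      by (simp add: sum_distrib_left[symmetric] mult.assoc)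
    have t2: "(\<Sum>a<m. \<Sum>b<n. G a b * (prodUV r (\<lambda>_ _ _. 0) V (ar b) a b + prodUV r U Dv (ar b) a b))
       = (\<Sum>a<m. \<Sum>b<n. G a b * (\<Sum>k<r. U 0 a k * Dv (ar b) k b))"
    proof (intro sum.cong refl)
      fix a b assume "a \<in> {..<m}" "b \<in> {..<n}"
      then have "ar b < nA" "a < m" using arb by auto
      then have "\<forall>k<r. U (ar b) a k = U 0 a k" using cons by blast
      then show "G a b * (prodUV r (\<lambda>_ _ _. 0) V (ar b) a b + prodUV r U Dv (ar b) a b) = G a b * (\<Sum>k<r. U 0 a k * Dv (ar b) k b)"
        unfolding prodUV_def by simp
    qed
    have t3: "(\<Sum>l<nA. \<Sum>j\<in>N l. (\<Sum>a<m. \<Sum>k<r. Lam l j a k * (0 - 0)) + (\<Sum>a<m. \<Sum>k<r. Gam l j a k * (0 - 0))) = 0"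
      by simp
    show ?thesis using gA unfolding t1 t2 t3 by simp
  qed
  have A2: "(\<Sum>a<m. \<Sum>b<n. G a b * (\<Sum>k<r. U 0 a k * Dv (ar b) k b)) = (\<Sum>l<nA. \<Sum>k<r. \<Sum>b\<in>area ar n l. H k b * Dv l k b)"
  proof -
    have "(\<Sum>a<m. \<Sum>b<n. G a b * (\<Sum>k<r. U 0 a k * Dv (ar b) k b)) = (\<Sum>a<m. \<Sum>b<n. \<Sum>k<r. G a b * U 0 a k * Dv (ar b) k b)"
      by (simp add: sum_distrib_left mult.assoc)
    also have "... = (\<Sum>b<n. \<Sum>a<m. \<Sum>k<r. G a b * U 0 a k * Dv (ar b) k b)" by (rule sum.swap)
    also have "... = (\<Sum>b<n. \<Sum>k<r. \<Sum>a<m. G a b * U 0 a k * Dv (ar b) k b)" by (rule sum.cong[OF refl], rule sum.swap)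
    also have "... = (\<Sum>b<n. \<Sum>k<r. H k b * Dv (ar b) k b)"
      unfolding H_def by (intro sum.cong refl) (simp add: sum_distrib_left sum_distrib_right mult_ac)
    also have "... = (\<Sum>l<nA. \<Sum>b\<in>area ar n l. \<Sum>k<r. H k b * Dv (ar b) k b)" by (rule partition_sum[OF arb])
    also have "... = (\<Sum>l<nA. \<Sum>b\<in>area ar n l. \<Sum>k<r. H k b * Dv l k b)"
      by (intro sum.cong refl) (auto simp: area_def)
    also have "... = (\<Sum>l<nA. \<Sum>k<r. \<Sum>b\<in>area ar n l. H k b * Dv l k b)"
      by (rule sum.cong[OF refl], rule sum.swap)
    finally show ?thesis .
  qed
  have A3: "(\<Sum>l<nA. \<Sum>k<r. \<Sum>b\<in>area ar n l. Dv l k b * Dv l k b) = 0"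
  proof -
    have "(\<Sum>l<nA. \<Sum>k<r. \<Sum>b\<in>area ar n l. Dv l k b * Dv l k b)
       = (\<Sum>l<nA. \<Sum>k<r. \<Sum>b\<in>area ar n l. V l k b * Dv l k b + H k b * Dv l k b)"
      by (intro sum.cong refl) (simp add: Dv_def algebra_simps)
    also have "... = (\<Sum>l<nA. \<Sum>k<r. \<Sum>b\<in>area ar n l. V l k b * Dv l k b) + (\<Sum>l<nA. \<Sum>k<r. \<Sum>b\<in>area ar n l. H k b * Dv l k b)"
      by (simp only: sum.distrib)
    finally show ?thesis using A1 A2 by simp
  qed
  have VA: "\<forall>k<r. \<forall>b<n. V (ar b) k b = - H k b"
  proof (intro allI impI)
    fix k b assume kb: "k < r" "b < n"
    then have "ar b \<in> {..<nA}" "b \<in> area ar n (ar b)" using arb by (auto simp: area_def)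
    then have "Dv (ar b) k b = 0"
      using sq_sum_zero3[OF _ _ _ A3] finite_area kb by auto
    then show "V (ar b) k b = - H k b" unfolding Dv_def by simp
  qed
  define K where "K a k = (\<Sum>b<n. G a b * V (ar b) k b)" for a k
  define W where "W a k = U 0 a k + K a k" for a k
  have gB: "(\<Sum>l<nA. (1/2) * ((1 / real nA) * (\<Sum>a<m. \<Sum>k<r. 2 * U l a k * W a k)
                + (\<Sum>k<r. \<Sum>b\<in>area ar n l. 2 * V l k b * 0)))
     + (\<Sum>a<m. \<Sum>b<n. G a b * (prodUV r (\<lambda>l a k. W a k) V (ar b) a b + prodUV r U (\<lambda>_ _ _. 0) (ar b) a b))
     + (\<Sum>l<nA. \<Sum>j\<in>N l. (\<Sum>a<m. \<Sum>k<r. Lam l j a k * (W a k - W a k)) + (\<Sum>a<m. \<Sum>k<r. Gam l j a k * (W a k - W a k))) = 0"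
    unfolding G_def
    by (rule stationary_grad[where dU = "\<lambda>l a k. W a k" and dV = "\<lambda>_ _ _. 0" and dS = "\<lambda>l j a k. W a k", OF HO HN HP Hq mu nu der[rule_format]])
  have B1: "(\<Sum>a<m. \<Sum>k<r. U 0 a k * W a k) + (\<Sum>a<m. \<Sum>b<n. G a b * (\<Sum>k<r. W a k * V (ar b) k b)) = 0"
  proof -
    have pl: "(1/2) * ((1 / real nA) * (\<Sum>a<m. \<Sum>k<r. 2 * U l a k * W a k)
                + (\<Sum>k<r. \<Sum>b\<in>area ar n l. 2 * V l k b * 0)) = (1 / real nA) * (\<Sum>a<m. \<Sum>k<r. U 0 a k * W a k)"
      if l: "l < nA" for l
    proof -
      have "(\<Sum>a<m. \<Sum>k<r. 2 * U l a k * W a k) = 2 * (\<Sum>a<m. \<Sum>k<r. U 0 a k * W a k)"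
        unfolding sum_distrib_left
      proof (intro sum.cong refl)
        fix a k assume "a \<in> {..<m}" "k \<in> {..<r}"
        then have "U l a k = U 0 a k" using cons l by blast
        then show "2 * U l a k * W a k = 2 * (U 0 a k * W a k)" by simp
      qed
      then show ?thesis by simp
    qed
    have t1: "(\<Sum>l<nA. (1/2) * ((1 / real nA) * (\<Sum>a<m. \<Sum>k<r. 2 * U l a k * W a k)
                + (\<Sum>k<r. \<Sum>b\<in>area ar n l. 2 * V l k b * 0))) = (\<Sum>a<m. \<Sum>k<r. U 0 a k * W a k)"
    proof -
      have "(\<Sum>l<nA. (1/2) * ((1 / real nA) * (\<Sum>a<m. \<Sum>k<r. 2 * U l a k * W a k)
                + (\<Sum>k<r. \<Sum>b\<in>area ar n l. 2 * V l k b * 0))) = (\<Sum>l<nA. (1 / real nA) * (\<Sum>a<m. \<Sum>k<r. U 0 a k * W a k))"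
        using pl by (intro sum.cong refl) auto
      also have "... = (\<Sum>a<m. \<Sum>k<r. U 0 a k * W a k)" using assms(4) by simp
      finally show ?thesis .
    qed
    have t2: "(\<Sum>a<m. \<Sum>b<n. G a b * (prodUV r (\<lambda>l a k. W a k) V (ar b) a b + prodUV r U (\<lambda>_ _ _. 0) (ar b) a b))
       = (\<Sum>a<m. \<Sum>b<n. G a b * (\<Sum>k<r. W a k * V (ar b) k b))"
      unfolding prodUV_def by simp
    have t3: "(\<Sum>l<nA. \<Sum>j\<in>N l. (\<Sum>a<m. \<Sum>k<r. Lam l j a k * (W a k - W a k)) + (\<Sum>a<m. \<Sum>k<r. Gam l j a k * (W a k - W a k))) = 0"
      by simp
    show ?thesis using gB unfolding t1 t2 t3 by simp
  qed
  have B2: "(\<Sum>a<m. \<Sum>b<n. G a b * (\<Sum>k<r. W a k * V (ar b) k b)) = (\<Sum>a<m. \<Sum>k<r. K a k * W a k)"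
  proof (rule sum.cong[OF refl])
    fix a
    have "(\<Sum>b<n. G a b * (\<Sum>k<r. W a k * V (ar b) k b)) = (\<Sum>b<n. \<Sum>k<r. G a b * (W a k * V (ar b) k b))"
      by (simp add: sum_distrib_left)
    also have "... = (\<Sum>k<r. \<Sum>b<n. G a b * (W a k * V (ar b) k b))" by (rule sum.swap)
    also have "... = (\<Sum>k<r. K a k * W a k)"
      unfolding K_def by (intro sum.cong refl) (simp add: sum_distrib_left sum_distrib_right mult_ac)
    finally show "(\<Sum>b<n. G a b * (\<Sum>k<r. W a k * V (ar b) k b)) = (\<Sum>k<r. K a k * W a k)" .
  qed
  have B3: "(\<Sum>a<m. \<Sum>k<r. W a k * W a k) = 0"
  proof -
    have "(\<Sum>a<m. \<Sum>k<r. W a k * W a k) = (\<Sum>a<m. \<Sum>k<r. U 0 a k * W a k + K a k * W a k)"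
      by (intro sum.cong refl) (simp add: W_def algebra_simps)
    also have "... = (\<Sum>a<m. \<Sum>k<r. U 0 a k * W a k) + (\<Sum>a<m. \<Sum>k<r. K a k * W a k)"
      by (simp only: sum.distrib)
    finally show ?thesis using B1 B2 by simp
  qed
  have UB: "\<forall>a<m. \<forall>k<r. U 0 a k = - K a k"
  proof (intro allI impI)
    fix a k assume ak: "a < m" "k < r"
    then have "W a k = 0" using sq_sum_zero2[OF _ _ B3] by auto
    then show "U 0 a k = - K a k" unfolding W_def by simp
  qed
  have tr1: "(\<Sum>a<m. \<Sum>b<n. G a b * Xb a b) = - (\<Sum>k<r. \<Sum>b<n. (V (ar b) k b)\<^sup>2)"
  proof -
    have "(\<Sum>a<m. \<Sum>b<n. G a b * Xb a b) = (\<Sum>a<m. \<Sum>b<n. \<Sum>k<r. G a b * (U 0 a k * V (ar b) k b))"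
      unfolding Xb_def by (simp add: sum_distrib_left)
    also have "... = (\<Sum>b<n. \<Sum>a<m. \<Sum>k<r. G a b * (U 0 a k * V (ar b) k b))" by (rule sum.swap)
    also have "... = (\<Sum>b<n. \<Sum>k<r. \<Sum>a<m. G a b * (U 0 a k * V (ar b) k b))" by (rule sum.cong[OF refl], rule sum.swap)
    also have "... = (\<Sum>b<n. \<Sum>k<r. H k b * V (ar b) k b)"
      unfolding H_def by (intro sum.cong refl) (simp add: sum_distrib_left sum_distrib_right mult_ac)
    also have "... = (\<Sum>b<n. \<Sum>k<r. - ((V (ar b) k b)\<^sup>2))"
    proof (intro sum.cong refl)
      fix b k assume "b \<in> {..<n}" "k \<in> {..<r}"
      then have "V (ar b) k b = - H k b" using VA by blast
      then show "H k b * V (ar b) k b = - ((V (ar b) k b)\<^sup>2)" by (simp add: power2_eq_square)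
    qed
    also have "... = - (\<Sum>k<r. \<Sum>b<n. (V (ar b) k b)\<^sup>2)"
      by (simp add: sum_negf sum.swap[of _ "{..<n}"])
    finally show ?thesis .
  qed
  have tr2: "(\<Sum>a<m. \<Sum>b<n. G a b * Xb a b) = - (\<Sum>a<m. \<Sum>k<r. (U 0 a k)\<^sup>2)"
  proof -
    have "(\<Sum>a<m. \<Sum>b<n. G a b * Xb a b) = (\<Sum>a<m. \<Sum>b<n. \<Sum>k<r. G a b * (U 0 a k * V (ar b) k b))"
      unfolding Xb_def by (simp add: sum_distrib_left)
    also have "... = (\<Sum>a<m. \<Sum>k<r. \<Sum>b<n. G a b * (U 0 a k * V (ar b) k b))" by (rule sum.cong[OF refl], rule sum.swap)
    also have "... = (\<Sum>a<m. \<Sum>k<r. U 0 a k * K a k)"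
      unfolding K_def by (intro sum.cong refl) (simp add: sum_distrib_left sum_distrib_right mult_ac)
    also have "... = (\<Sum>a<m. \<Sum>k<r. - ((U 0 a k)\<^sup>2))"
    proof (intro sum.cong refl)
      fix a k assume "a \<in> {..<m}" "k \<in> {..<r}"
      then have "U 0 a k = - K a k" using UB by blast
      then show "U 0 a k * K a k = - ((U 0 a k)\<^sup>2)" by (simp add: power2_eq_square)
    qed
    also have "... = - (\<Sum>a<m. \<Sum>k<r. (U 0 a k)\<^sup>2)" by (simp add: sum_negf)
    finally show ?thesis .
  qed
  have nucXb: "nuclear_norm m n Xb \<le> - (\<Sum>a<m. \<Sum>b<n. G a b * Xb a b)"
  proof -
    have "nuclear_norm m n Xb \<le> ((\<Sum>a<m. \<Sum>k<r. (U 0 a k)\<^sup>2) + (\<Sum>k<r. \<Sum>b<n. (V (ar b) k b)\<^sup>2)) / 2"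
      by (rule nuc_upper) (simp add: Xb_def)
    then show ?thesis using tr1 tr2 by simp
  qed
  have main: "NNobj m n nA ar \<Omega> N Ec p f \<mu> \<nu> M Xb \<le> NNobj m n nA ar \<Omega> N Ec p f \<mu> \<nu> M X"
    if sp: "spectral_norm m n G \<le> 1" for X
  proof -
    let ?Q = "\<lambda>Y. \<mu>/2 * (\<Sum>c\<in>Bidx nA \<Omega> p. (Bmap m n ar N Ec \<mu> \<nu> Y c - dvec \<mu> \<nu> M f c)\<^sup>2)"
    have low: "\<bar>\<Sum>a<m. \<Sum>b<n. G a b * X a b\<bar> \<le> nuclear_norm m n X" by (rule nuc_lower[OF sp])
    have Q: "(\<Sum>a<m. \<Sum>b<n. G a b * (X a b - Xb a b)) \<le> ?Q X - ?Q Xb"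
      unfolding G_def by (rule Qineq[OF HO mu])
    have "(\<Sum>a<m. \<Sum>b<n. G a b * (X a b - Xb a b)) = (\<Sum>a<m. \<Sum>b<n. G a b * X a b) - (\<Sum>a<m. \<Sum>b<n. G a b * Xb a b)"
      by (simp add: right_diff_distrib sum_subtractf)
    then show ?thesis unfolding NNobj_def using low Q nucXb by linarith
  qed
  show ?thesis
    unfolding Let_def Xb_def[symmetric] G_def[symmetric]
    using cons main by blast
qed

end
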